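(* Let $\Omega$ be a domain in $\mathbb R^2$ and let $F$ be a compact subdomain of $\Omega$. Suppose $x\in\Omega\setminus\overline F$, $r>0$ with $B(x,2r)\subset\Omega\setminus\overline F$, and $\gamma$ is a curve joining $x$ to the circle $S(x,2r)$. Then $\mathrm{cap}(F,\gamma;\Omega)>c(r)>0$, where $c(r)$ is a positive constant depending on $r$ (and not on $\gamma$).
   Context: For disjoint sets $F_0,F_1\subset\Omega$, the conformal capacity is $\mathrm{cap}(F_0,F_1;\Omega)=\inf\int_\Omega|\nabla v|^2dx$, where the infimum is over nonnegative $v\in C(\Omega)$ with square integrable weak gradient, $v=0$ in a neighborhood of $F_0$, and $v\ge1$ in a neighborhood of $F_1$. $B(x,r)$ and $S(x,r)$ denote the Euclidean disc and circle of radius $r$ centered at $x$. *)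

theory Defs
  imports "HOL-Analysis.Analysis"
begin

type_synonym R2 = "real^2"

fun Ck :: "nat \<Rightarrow> (R2 \<Rightarrow> real) \<Rightarrow> bool" where
  "Ck 0 f = continuous_on UNIV f"
| "Ck (Suc k) f = ((\<forall>x. f differentiable (at x)) \<and>
      (\<forall>i\<in>(Basis::R2 set). Ck k (\<lambda>x. frechet_derivative f (at x) i)))"

definition smooth_fun :: "(R2 \<Rightarrow> real) \<Rightarrow> bool" where
  "smooth_fun f \<longleftrightarrow> (\<forall>k. Ck k f)"

definition test_fun :: "R2 set \<Rightarrow> (R2 \<Rightarrow> real) \<Rightarrow> bool" where
  "test_fun \<Omega> \<phi> \<longleftrightarrow> smooth_fun \<phi> \<and>
     compact (closure {x. \<phi> x \<noteq> 0}) \<and> closure {x. \<phi> x \<noteq> 0} \<subseteq> \<Omega>"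

definition weak_gradient :: "R2 set \<Rightarrow> (R2 \<Rightarrow> real) \<Rightarrow> (R2 \<Rightarrow> R2) \<Rightarrow> bool" where
  "weak_gradient \<Omega> v G \<longleftrightarrow>
     (\<forall>K. compact K \<and> K \<subseteq> \<Omega> \<longrightarrow> G absolutely_integrable_on K) \<and>
     (\<forall>\<phi> i. test_fun \<Omega> \<phi> \<and> i \<in> Basis \<longrightarrow>
        integral \<Omega> (\<lambda>x. v x * frechet_derivative \<phi> (at x) i)
        = - integral \<Omega> (\<lambda>x. (G x \<bullet> i) * \<phi> x))"

definition cap_admissible :: "R2 set \<Rightarrow> R2 set \<Rightarrow> R2 set \<Rightarrow> (R2 \<Rightarrow> real) \<Rightarrow> (R2 \<Rightarrow> R2) \<Rightarrow> bool" where
  "cap_admissible F0 F1 \<Omega> v G \<longleftrightarrow>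
     continuous_on \<Omega> v \<and> (\<forall>x\<in>\<Omega>. 0 \<le> v x) \<and>
     weak_gradient \<Omega> v G \<and> (\<lambda>x. norm (G x) ^ 2) integrable_on \<Omega> \<and>
     (\<exists>U. open U \<and> F0 \<subseteq> U \<and> (\<forall>x\<in>U \<inter> \<Omega>. v x = 0)) \<and>
     (\<exists>U. open U \<and> F1 \<subseteq> U \<and> (\<forall>x\<in>U \<inter> \<Omega>. 1 \<le> v x))"

text \<open>Conformal capacity (infimum of the Dirichlet integral; \<open>\<infinity>\<close> if no admissible function).\<close>
definition cap :: "R2 set \<Rightarrow> R2 set \<Rightarrow> R2 set \<Rightarrow> ereal" where
  "cap F0 F1 \<Omega> = Inf {ereal (integral \<Omega> (\<lambda>x. norm (G x) ^ 2)) | v G. cap_admissible F0 F1 \<Omega> v G}"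

end

theory Submission
  imports Defs "HOL-Computational_Algebra.Polynomial"
begin


fun Cn :: "nat \<Rightarrow> (real \<Rightarrow> real) \<Rightarrow> bool" where
  "Cn 0 f = True"
| "Cn (Suc n) f = (\<exists>f'. (\<forall>x. (f has_real_derivative f' x) (at x)) \<and> Cn n f')"

definition sm :: "(real \<Rightarrow> real) \<Rightarrow> bool" where "sm f \<longleftrightarrow> (\<forall>n. Cn n f)"

lemma Cn_Suc_imp: "Cn (Suc n) f \<Longrightarrow> Cn n f"
proof (induction n arbitrary: f)
  case 0 then show ?case by simp
next
  case (Suc n)
  then obtain f' where "\<forall>x. (f has_real_derivative f' x) (at x)" "Cn (Suc n) f'" by auto
  with Suc.IH show ?case by auto
qed

lemma Cn_const: "Cn n (\<lambda>x. c)"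
  by (induction n arbitrary: c) (auto intro!: exI[of _ "\<lambda>x. 0"] derivative_eq_intros)

lemma Cn_add: "Cn n f \<Longrightarrow> Cn n g \<Longrightarrow> Cn n (\<lambda>x. f x + g x)"
proof (induction n arbitrary: f g)
  case 0 then show ?case by simp
next
  case (Suc n)
  from Suc.prems obtain f' g' where f: "\<forall>x. (f has_real_derivative f' x) (at x)" "Cn n f'"
    and g: "\<forall>x. (g has_real_derivative g' x) (at x)" "Cn n g'" by auto
  show ?case using f g Suc.IH[of f' g']
    by (auto intro!: exI[of _ "\<lambda>x. f' x + g' x"] derivative_eq_intros)
qed

lemma Cn_cmul: "Cn n f \<Longrightarrow> Cn n (\<lambda>x. c * f x)"
proof (induction n arbitrary: f)
  case 0 then show ?case by simp
next
  case (Suc n)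
  from Suc.prems obtain f' where f: "\<forall>x. (f has_real_derivative f' x) (at x)" "Cn n f'" by auto
  show ?case using f Suc.IH[of f']
    by (auto intro!: exI[of _ "\<lambda>x. c * f' x"] derivative_eq_intros)
qed

lemma Cn_mult: "Cn n f \<Longrightarrow> Cn n g \<Longrightarrow> Cn n (\<lambda>x. f x * g x)"
proof (induction n arbitrary: f g)
  case 0 then show ?case by simp
next
  case (Suc n)
  from Suc.prems obtain f' g' where f: "\<forall>x. (f has_real_derivative f' x) (at x)" "Cn n f'"
    and g: "\<forall>x. (g has_real_derivative g' x) (at x)" "Cn n g'" by auto
  have "Cn n f" "Cn n g" using Suc.prems Cn_Suc_imp by blast+
  then have "Cn n (\<lambda>x. f' x * g x + f x * g' x)"
    using Cn_add Suc.IH f g by blast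
  then show ?case using f g
    by (auto intro!: exI[of _ "\<lambda>x. f' x * g x + f x * g' x"] derivative_eq_intros)
qed

lemma Cn_affine: "Cn n f \<Longrightarrow> Cn n (\<lambda>x. f (c * x + d))"
proof (induction n arbitrary: f)
  case 0 then show ?case by simp
next
  case (Suc n)
  from Suc.prems obtain f' where f: "\<forall>x. (f has_real_derivative f' x) (at x)" "Cn n f'" by auto
  have "Cn n (\<lambda>x. c * f' (c * x + d))" using Suc.IH[OF f(2)] Cn_cmul by blast
  moreover have "((\<lambda>x. f (c * x + d)) has_real_derivative c * f' (c * x + d)) (at x)" for x
  proof -
    have "((\<lambda>x. c * x + d) has_real_derivative c) (at x)"
      by (auto intro!: derivative_eq_intros)
    from DERIV_chain2[OF f(1)[rule_format, of "c*x+d"] this] show ?thesis by (simp add: mult.commute)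
  qed
  ultimately show ?case by (auto intro!: exI[of _ "\<lambda>x. c * f' (c * x + d)"])
qed

lemma sm_add: "sm f \<Longrightarrow> sm g \<Longrightarrow> sm (\<lambda>x. f x + g x)" by (simp add: sm_def Cn_add)
lemma sm_cmul: "sm f \<Longrightarrow> sm (\<lambda>x. c * f x)" by (simp add: sm_def Cn_cmul)
lemma sm_mult: "sm f \<Longrightarrow> sm g \<Longrightarrow> sm (\<lambda>x. f x * g x)" by (simp add: sm_def Cn_mult)
lemma sm_affine: "sm f \<Longrightarrow> sm (\<lambda>x. f (c * x + d))" by (simp add: sm_def Cn_affine)
lemma sm_diff: "sm f \<Longrightarrow> sm g \<Longrightarrow> sm (\<lambda>x. f x - g x)"
  using sm_add[of f "\<lambda>x. (-1) * g x"] sm_cmul[of g "-1"] by simp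

lemma sm_deriv: assumes "sm f" shows "\<exists>f'. (\<forall>x. (f has_real_derivative f' x) (at x)) \<and> sm f'"
proof -
  from assms have "Cn (Suc 0) f" by (simp add: sm_def)
  then obtain f' where f': "\<forall>x. (f has_real_derivative f' x) (at x)" by auto
  have "Cn n f'" for n
  proof -
    from assms have "Cn (Suc n) f" by (simp add: sm_def)
    then obtain g where g: "\<forall>x. (f has_real_derivative g x) (at x)" "Cn n g" by auto
    have "g = f'" using g(1) f' by (meson DERIV_unique ext)
    then show ?thesis using g by simp
  qed
  then show ?thesis using f' by (auto simp: sm_def)
qed

lemma sm_antideriv:
  assumes "sm f'" "\<forall>x. (f has_real_derivative f' x) (at x)" shows "sm f"
proof -
  have "Cn n f" for n
  proof (cases n)
    case 0 then show ?thesis by simp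
  next
    case (Suc m) then show ?thesis using assms by (auto simp: sm_def)
  qed
  then show ?thesis by (simp add: sm_def)
qed



definition hp :: "real poly \<Rightarrow> real \<Rightarrow> real" where
  "hp p t = (if 0 < t then poly p (inverse t) * exp (- inverse t) else 0)"

lemma poly_exp_tendsto:
  fixes q :: "real poly"
  shows "((\<lambda>y. poly q y * exp (- y)) \<longlongrightarrow> (0::real)) at_top"
proof -
  have "((\<lambda>y. \<Sum>i\<le>degree q. coeff q i * (y ^ i / exp y)) \<longlongrightarrow> (\<Sum>i\<le>degree q. coeff q i * 0)) at_top"
    by (intro tendsto_sum tendsto_mult tendsto_const tendsto_power_div_exp_0)
  moreover have "(\<Sum>i\<le>degree q. coeff q i * (y ^ i / exp y)) = poly q y * exp (- y)" for y
  proof -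
    have "(\<Sum>i\<le>degree q. coeff q i * (y ^ i / exp y)) = (\<Sum>i\<le>degree q. coeff q i * y ^ i) / exp y"
      by (simp add: sum_divide_distrib)
    also have "\<dots> = poly q y * exp (- y)" by (simp add: poly_altdef exp_minus divide_inverse)
    finally show ?thesis .
  qed
  ultimately show ?thesis by simp
qed

lemma hp_tendsto0: "(hp r \<longlongrightarrow> 0) (at (0::real))"
proof (rule filterlim_split_at)
  show "(hp r \<longlongrightarrow> 0) (at_left 0)"
  proof (rule tendsto_eventually)
    show "\<forall>\<^sub>F x in at_left 0. hp r x = 0"
      by (auto simp: hp_def eventually_at_filter)
  qed
next
  have "((\<lambda>x. poly r (inverse x) * exp (- inverse x)) \<longlongrightarrow> 0) (at_right (0::real))"
    using filterlim_compose[OF poly_exp_tendsto filterlim_inverse_at_top_right] by simp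
  moreover have "\<forall>\<^sub>F x in at_right 0. poly r (inverse x) * exp (- inverse x) = hp r x"
    using eventually_at_right_less[of 0] by eventually_elim (auto simp: hp_def)
  ultimately show "(hp r \<longlongrightarrow> 0) (at_right 0)" by (rule Lim_transform_eventually)
qed

definition hq :: "real poly \<Rightarrow> real poly" where
  "hq p = [:0,0,1:] * (p - pderiv p)"

lemma hp_deriv: "(hp p has_real_derivative hp (hq p) t) (at t)"
proof (cases "t > 0")
  case True
  have d: "((\<lambda>t. poly p (inverse t) * exp (- inverse t)) has_real_derivative
     (poly (pderiv p) (inverse t) * (- (inverse t * inverse t)) * exp (- inverse t) +
      poly p (inverse t) * (exp (- inverse t) * (inverse t * inverse t)))) (at t)"
    using True
    by (auto intro!: derivative_eq_intros DERIV_chain2[OF poly_DERIV] simp: power2_eq_square)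
  have e: "poly (pderiv p) (inverse t) * (- (inverse t * inverse t)) * exp (- inverse t) +
      poly p (inverse t) * (exp (- inverse t) * (inverse t * inverse t)) = hp (hq p) t"
    using True by (simp add: hp_def hq_def algebra_simps power2_eq_square)
  have "\<forall>\<^sub>F x in nhds t. poly p (inverse x) * exp (- inverse x) = hp p x"
    using eventually_nhds_in_open[of "{0<..}" t] True
    by (auto simp: hp_def elim!: eventually_mono)
  then have "((\<lambda>t. poly p (inverse t) * exp (- inverse t)) has_real_derivative hp (hq p) t) (at t) = (hp p has_real_derivative hp (hq p) t) (at t)"
    by (rule DERIV_cong_ev[OF refl _ refl])
  with d e show ?thesis by simp
next
  case False
  show ?thesis
  proof (cases "t < 0")
    case True
    have "\<forall>\<^sub>F x in nhds t. 0 = hp p x"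
      using eventually_nhds_in_open[of "{..<0}" t] True
      by (auto simp: hp_def elim!: eventually_mono)
    then have "((\<lambda>x. 0) has_real_derivative 0) (at t) = (hp p has_real_derivative 0) (at t)"
      by (rule DERIV_cong_ev[OF refl _ refl])
    then have "(hp p has_real_derivative 0) (at t)" by simp
    then show ?thesis using True by (simp add: hp_def)
  next
    case False
    with \<open>\<not> t > 0\<close> have t0: "t = 0" by simp
    have "((\<lambda>x. (hp p x - hp p 0) / (x - 0)) \<longlongrightarrow> 0) (at 0)"
    proof -
      have "\<forall>\<^sub>F x in at 0. hp ([:0,1:] * p) x = (hp p x - hp p 0) / (x - 0)"
        by (auto simp: hp_def eventually_at_filter field_simps)
      then show ?thesis by (rule Lim_transform_eventually[OF hp_tendsto0])
    qed
    then have "(hp p has_real_derivative 0) (at 0)"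
      by (simp add: has_field_derivative_iff)
    then show ?thesis using t0 by (simp add: hp_def)
  qed
qed

lemma Cn_hp: "Cn n (hp p)"
proof (induction n arbitrary: p)
  case 0 then show ?case by simp
next
  case (Suc n) then show ?case using hp_deriv by auto
qed

lemma sm_hp: "sm (hp p)" by (simp add: sm_def Cn_hp)



definition b0 :: "real \<Rightarrow> real" where "b0 t = hp 1 t * hp 1 (1 - t)"

lemma hp1: "hp 1 t = (if 0 < t then exp (- inverse t) else 0)"
  by (simp add: hp_def)

lemma sm_b0: "sm b0"
proof -
  have "sm (\<lambda>t. hp 1 ((-1) * t + 1))" by (rule sm_affine[OF sm_hp])
  then show ?thesis unfolding b0_def using sm_mult[OF sm_hp] by simp
qed

lemma b0_nonneg: "0 \<le> b0 t" by (simp add: b0_def hp1)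
lemma b0_zero: "t \<le> 0 \<or> 1 \<le> t \<Longrightarrow> b0 t = 0" by (auto simp: b0_def hp1)
lemma b0_pos: "0 < t \<Longrightarrow> t < 1 \<Longrightarrow> 0 < b0 t" by (simp add: b0_def hp1)

lemma sm_diffble: "sm f \<Longrightarrow> \<exists>f'. \<forall>x. (f has_real_derivative f' x) (at x)"
  using sm_deriv by blast

lemma sm_cont: "sm f \<Longrightarrow> continuous_on A f"
  using sm_diffble by (meson DERIV_isCont continuous_at_imp_continuous_on)

lemma sm_isCont: "sm f \<Longrightarrow> isCont f x"
  using sm_diffble DERIV_isCont by blast

definition Zc :: real where "Zc = integral {-1..1} b0"

lemma Zc_pos: "0 < Zc"
proof -
  have c: "continuous_on {-1..1} b0" by (rule sm_cont[OF sm_b0])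
  have i: "(b0 has_integral Zc) {-1..1}" unfolding Zc_def
    using integrable_continuous_real[OF c] by (simp add: integrable_integral)
  have "0 \<le> Zc" unfolding Zc_def by (rule integral_nonneg[OF integrable_continuous_real[OF c]]) (simp add: b0_nonneg)
  moreover have "Zc \<noteq> 0"
  proof
    assume "Zc = 0"
    then have "b0 (1/2) = 0"
      using has_integral_0_cbox_imp_0[of "-1" 1 b0 "1/2"] c i b0_nonneg by auto
    with b0_pos[of "1/2"] show False by simp
  qed
  ultimately show ?thesis by simp
qed

definition Sf :: "real \<Rightarrow> real" where "Sf u = integral {-1..u} b0 / Zc"

lemma integral_b0_neg: "u \<le> 0 \<Longrightarrow> integral {-1..u} b0 = 0"
proof -
  assume u: "u \<le> 0"
  have "integral {-1..u} b0 = integral {-1..u} (\<lambda>x. 0)"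
    by (rule integral_cong) (use u b0_zero in auto)
  then show ?thesis by simp
qed

lemma Sf_deriv: "(Sf has_real_derivative b0 u / Zc) (at u)"
proof (cases "u > -1/2")
  case True
  have c: "continuous_on {-1..u+1} b0" by (rule sm_cont[OF sm_b0])
  have "((\<lambda>x. integral {-1..x} b0) has_real_derivative b0 u) (at u within {-1..u+1})"
    using True by (intro integral_has_real_derivative[OF c]) auto
  then have "((\<lambda>x. integral {-1..x} b0) has_real_derivative b0 u) (at u within {-1<..<u+1})"
    by (rule has_field_derivative_subset) auto
  then have "((\<lambda>x. integral {-1..x} b0) has_real_derivative b0 u) (at u)"
    using True by (subst (asm) at_within_open) auto
  then show ?thesis unfolding Sf_def using Zc_pos by (auto intro!: derivative_eq_intros)
next
  case False
  have "\<forall>\<^sub>F x in nhds u. 0 = Sf x"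
    using eventually_nhds_in_open[of "{..<0}" u] False
    by (auto simp: Sf_def integral_b0_neg elim!: eventually_mono)
  then have "((\<lambda>x. 0) has_real_derivative 0) (at u) = (Sf has_real_derivative 0) (at u)"
    by (rule DERIV_cong_ev[OF refl _ refl])
  then show ?thesis using False b0_zero[of u] by simp
qed

lemma sm_Sf: "sm Sf"
  by (rule sm_antideriv[OF _ allI[OF Sf_deriv]]) (simp add: sm_b0 sm_cmul[of b0 "inverse Zc"] divide_inverse mult.commute)

lemma Sf_zero: "u \<le> 0 \<Longrightarrow> Sf u = 0"
  by (simp add: Sf_def integral_b0_neg)

lemma Sf_one: assumes "1 \<le> u" shows "Sf u = 1"
proof -
  have c: "continuous_on {-1..u} b0" by (rule sm_cont[OF sm_b0])
  have "integral {-1..1} b0 + integral {1..u} b0 = integral {-1..u} b0"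
    using assms by (intro Henstock_Kurzweil_Integration.integral_combine integrable_continuous_real[OF c]) auto
  moreover have "integral {1..u} b0 = integral {1..u} (\<lambda>x. 0)"
    by (rule integral_cong) (use b0_zero in auto)
  ultimately have "integral {-1..u} b0 = Zc" by (simp add: Zc_def)
  then show ?thesis using Zc_pos by (simp add: Sf_def)
qed

lemma Sf_mono: "u \<le> u' \<Longrightarrow> Sf u \<le> Sf u'"
  by (rule DERIV_nonneg_imp_nondecreasing[of u u' Sf])
    (use Sf_deriv Zc_pos b0_nonneg in \<open>auto intro!: divide_nonneg_pos\<close>)



definition st :: "real \<Rightarrow> real \<Rightarrow> real \<Rightarrow> real" where "st c w t = Sf ((t - c) / w)"
definition rb :: "real \<Rightarrow> real \<Rightarrow> real \<Rightarrow> real" where "rb c w t = b0 ((t - c) / w) / (Zc * w)"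

lemma st_deriv: assumes "0 < w" shows "(st c w has_real_derivative rb c w t) (at t)"
proof -
  have "((\<lambda>t. (t - c) / w) has_real_derivative 1/w) (at t)" using assms by (auto intro!: derivative_eq_intros)
  from DERIV_chain2[OF Sf_deriv this] show ?thesis
    unfolding st_def rb_def using assms by simp
qed

lemma sm_st: "sm (st c w)"
proof -
  have "sm (\<lambda>t. Sf ((1/w) * t + (- c / w)))" by (rule sm_affine[OF sm_Sf])
  moreover have "(\<lambda>t. Sf ((1/w) * t + (- c / w))) = st c w"
    by (auto simp: st_def diff_divide_distrib)
  ultimately show ?thesis by simp
qed

lemma sm_rb: "sm (rb c w)"
proof -
  have "sm (\<lambda>t. inverse (Zc * w) * b0 ((1/w) * t + (- c / w)))" by (rule sm_cmul[OF sm_affine[OF sm_b0]])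
  moreover have "(\<lambda>t. inverse (Zc * w) * b0 ((1/w) * t + (- c / w))) = rb c w"
    by (simp add: fun_eq_iff rb_def diff_divide_distrib divide_inverse mult.commute right_diff_distrib)
  ultimately show ?thesis by simp
qed

lemma rb_nonneg: "0 < w \<Longrightarrow> 0 \<le> rb c w t"
  using Zc_pos b0_nonneg by (simp add: rb_def)

lemma rb_zero: "0 < w \<Longrightarrow> t \<le> c \<or> c + w \<le> t \<Longrightarrow> rb c w t = 0"
  by (auto simp: rb_def intro!: b0_zero simp: field_simps)

lemma rb_pos: "0 < w \<Longrightarrow> c < t \<Longrightarrow> t < c + w \<Longrightarrow> 0 < rb c w t"
  using Zc_pos by (auto simp: rb_def intro!: b0_pos divide_pos_pos simp: field_simps)

lemma st_zero: "0 < w \<Longrightarrow> t \<le> c \<Longrightarrow> st c w t = 0"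
  by (auto simp: st_def intro!: Sf_zero simp: field_simps)

lemma st_one: "0 < w \<Longrightarrow> c + w \<le> t \<Longrightarrow> st c w t = 1"
  by (auto simp: st_def intro!: Sf_one simp: field_simps)

lemma Sf_bounds: "0 \<le> Sf u \<and> Sf u \<le> 1"
proof -
  have "Sf (min u 0) \<le> Sf u" "Sf u \<le> Sf (max u 1)" by (auto intro!: Sf_mono)
  then show ?thesis using Sf_zero[of "min u 0"] Sf_one[of "max u 1"] by simp
qed

lemma st_bounds: "0 \<le> st c w t" "st c w t \<le> 1"
  using Sf_bounds by (auto simp: st_def)

lemma st_anti: "0 < w \<Longrightarrow> c \<le> c' \<Longrightarrow> st c' w t \<le> st c w t"
  unfolding st_def by (rule Sf_mono) (simp add: divide_right_mono)

definition tz :: "real \<Rightarrow> real \<Rightarrow> real \<Rightarrow> real \<Rightarrow> real" where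
  "tz a b e t = max 0 (min 1 (min ((t - a) / e + 1) ((b - t) / e + 1)))"

lemma tz_cont: "e \<noteq> 0 \<Longrightarrow> continuous_on A (tz a b e)"
  unfolding tz_def by (intro continuous_intros) auto

lemma tz_nonneg: "0 \<le> tz a b e t" by (simp add: tz_def)
lemma tz_le1: "tz a b e t \<le> 1" by (simp add: tz_def)
lemma tz_one: "0 < e \<Longrightarrow> a \<le> t \<Longrightarrow> t \<le> b \<Longrightarrow> tz a b e t = 1"
  by (auto simp: tz_def field_simps)
lemma tz_zero: assumes "0 < e" "t \<le> a - e \<or> b + e \<le> t" shows "tz a b e t = 0"
proof -
  have "(t - a) / e + 1 \<le> 0 \<or> (b - t) / e + 1 \<le> 0"
    using assms by (auto simp: field_simps)
  then show ?thesis unfolding tz_def by linarith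
qed



lemma two_cases: "(i::2) \<noteq> j \<Longrightarrow> k = i \<or> k = j"
  using exhaust_2[of i] exhaust_2[of j] exhaust_2[of k] by auto

definition bl :: "2 \<Rightarrow> real \<Rightarrow> real \<Rightarrow> R2" where "bl i p q = (\<chi> k. if k = i then p else q)"

lemma mem_bl: assumes "i \<noteq> j"
  shows "x \<in> cbox (bl i p q) (bl i p' q') \<longleftrightarrow> p \<le> x$i \<and> x$i \<le> p' \<and> q \<le> x$j \<and> x$j \<le> q'"
proof -
  have q: "(\<forall>k. Q k) \<longleftrightarrow> Q i \<and> Q j" for Q using two_cases[OF assms] by metis
  show ?thesis unfolding mem_box_cart q bl_def using assms by auto
qed

definition W :: "2 \<Rightarrow> 2 \<Rightarrow> (real \<Rightarrow> real) \<Rightarrow> (real \<Rightarrow> real) \<Rightarrow> R2 \<Rightarrow> real" where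
  "W i j a b x = a (x$i) * b (x$j)"

lemma comp_deriv:
  assumes "(a has_real_derivative a' (x$i)) (at (x$i))"
  shows "((\<lambda>x::R2. a (x$i)) has_derivative (\<lambda>h. h$i * a' (x$i))) (at x)"
proof -
  have l: "((\<lambda>x::R2. x$i) has_derivative (\<lambda>h. h$i)) (at x)"
    by (rule bounded_linear_imp_has_derivative[OF bounded_linear_vec_nth])
  have "(a has_derivative (\<lambda>h. h * a' (x$i))) (at (x$i))"
  proof -
    have "(\<lambda>h. h * a' (x$i)) = (*) (a' (x$i))" by (auto simp: fun_eq_iff)
    then show ?thesis using assms by (simp add: has_field_derivative_def)
  qed
  from has_derivative_compose[OF l this] show ?thesis by (simp add: o_def)
qed

lemma W_deriv:
  assumes "\<forall>t. (a has_real_derivative a' t) (at t)" "\<forall>t. (b has_real_derivative b' t) (at t)"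
  shows "(W i j a b has_derivative (\<lambda>h. a' (x$i) * h$i * b (x$j) + a (x$i) * (b' (x$j) * h$j))) (at x)"
  unfolding W_def
  using has_derivative_mult[OF comp_deriv[of a a' x i] comp_deriv[of b b' x j]] assms
  by (simp add: algebra_simps)

lemma Ck_add: "Ck k f \<Longrightarrow> Ck k g \<Longrightarrow> Ck k (\<lambda>x. f x + g x)"
proof (induction k arbitrary: f g)
  case 0 then show ?case by (auto intro!: continuous_intros)
next
  case (Suc k)
  have df: "\<And>x. (f has_derivative frechet_derivative f (at x)) (at x)"
    and dg: "\<And>x. (g has_derivative frechet_derivative g (at x)) (at x)"
  proof -
    have "\<forall>x. f differentiable at x" "\<forall>x. g differentiable at x" using Suc.prems by auto
    then show "\<And>x. (f has_derivative frechet_derivative f (at x)) (at x)"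
      "\<And>x. (g has_derivative frechet_derivative g (at x)) (at x)"
      using frechet_derivative_works by blast+
  qed
  have fd: "frechet_derivative (\<lambda>x. f x + g x) (at x) = (\<lambda>h. frechet_derivative f (at x) h + frechet_derivative g (at x) h)" for x
    using frechet_derivative_at[OF has_derivative_add[OF df dg]] by simp
  show ?case
  proof -
    have "\<forall>x. (\<lambda>x. f x + g x) differentiable at x"
      using has_derivative_add[OF df dg] differentiable_def by blast
    moreover have "\<forall>i\<in>Basis. Ck k (\<lambda>x. frechet_derivative (\<lambda>x. f x + g x) (at x) i)"
      using Suc.prems Suc.IH by (simp add: fd)
    ultimately show ?thesis by simp
  qed
qed

lemma Ck_W: "sm a \<Longrightarrow> sm b \<Longrightarrow> Ck k (W i j a b)"
proof (induction k arbitrary: a b)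
  case 0
  then show ?case unfolding W_def
    by (auto intro!: continuous_intros continuous_on_compose2[OF sm_cont[of a UNIV]]
          continuous_on_compose2[OF sm_cont[of b UNIV]])
next
  case (Suc k)
  obtain a' where a': "\<forall>t. (a has_real_derivative a' t) (at t)" "sm a'" using sm_deriv[OF Suc.prems(1)] by blast
  obtain b' where b': "\<forall>t. (b has_real_derivative b' t) (at t)" "sm b'" using sm_deriv[OF Suc.prems(2)] by blast
  have fd: "frechet_derivative (W i j a b) (at x) e = W i j (\<lambda>t. e$i * a' t) b x + W i j a (\<lambda>t. e$j * b' t) x" for x e
  proof -
    have "frechet_derivative (W i j a b) (at x) = (\<lambda>h. a' (x$i) * h$i * b (x$j) + a (x$i) * (b' (x$j) * h$j))"
      using frechet_derivative_at[OF W_deriv[OF a'(1) b'(1), of i j x]] by simp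
    then show ?thesis by (simp add: W_def algebra_simps)
  qed
  have "Ck k (\<lambda>x. W i j (\<lambda>t. e$i * a' t) b x + W i j a (\<lambda>t. e$j * b' t) x)" for e
    by (intro Ck_add Suc.IH sm_cmul a'(2) b'(2) Suc.prems)
  moreover have "\<forall>x. W i j a b differentiable at x"
    using W_deriv[OF a'(1) b'(1)] differentiable_def by blast
  ultimately show ?case by (simp add: fd)
qed

lemma test_fun_W:
  assumes ij: "i \<noteq> j" and "sm a" "sm b"
    and az: "\<And>t. a t \<noteq> 0 \<Longrightarrow> p \<le> t \<and> t \<le> p'"
    and bz: "\<And>t. b t \<noteq> 0 \<Longrightarrow> q \<le> t \<and> t \<le> q'"
    and sub: "cbox (bl i p q) (bl i p' q') \<subseteq> \<Omega>"
  shows "test_fun \<Omega> (W i j a b)"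
proof -
  have "{x. W i j a b x \<noteq> 0} \<subseteq> cbox (bl i p q) (bl i p' q')"
    using az bz by (auto simp: W_def mem_bl[OF ij])
  then have c: "closure {x. W i j a b x \<noteq> 0} \<subseteq> cbox (bl i p q) (bl i p' q')"
    by (rule closure_minimal[OF _ closed_cbox])
  show ?thesis unfolding test_fun_def smooth_fun_def
  proof (intro conjI allI)
    show "compact (closure {x. W i j a b x \<noteq> 0})"
      using compact_Int_closed[OF compact_cbox closed_closure, of "bl i p q" "bl i p' q'" "{x. W i j a b x \<noteq> 0}"] c
      by (simp add: Int_absorb1)
  qed (use Ck_W[OF assms(2,3)] c sub in auto)
qed



lemma comp_cont: assumes "continuous_on UNIV f" shows "continuous_on UNIV (\<lambda>x::R2. f (x$i))"
proof -
  have "continuous_on UNIV (\<lambda>x::R2. x$i)" by (intro continuous_on_component continuous_on_id)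
  from continuous_on_compose2[OF assms this] show ?thesis by simp
qed

lemma W_cont: "continuous_on UNIV f \<Longrightarrow> continuous_on UNIV g \<Longrightarrow> continuous_on UNIV (W i j f g)"
  unfolding W_def by (intro continuous_on_mult comp_cont)

lemma int_vw:
  assumes adm: "cap_admissible F0 F1 \<Omega> v G"
    and w: "continuous_on UNIV w" "\<And>x. w x \<noteq> 0 \<Longrightarrow> x \<in> cbox l u" and sub: "cbox l u \<subseteq> \<Omega>"
  shows "(\<lambda>x. v x * w x) integrable_on \<Omega>"
proof -
  have "continuous_on \<Omega> v" using adm by (simp add: cap_admissible_def)
  then have "continuous_on (cbox l u) (\<lambda>x. v x * w x)"
    by (rule continuous_on_mult[OF continuous_on_subset[OF _ sub] continuous_on_subset[OF w(1)]]) auto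
  then have "(\<lambda>x. v x * w x) integrable_on cbox l u" by (rule integrable_continuous)
  then show ?thesis by (rule integrable_on_superset) (use w(2) sub in auto)
qed

lemma int_fw:
  assumes f: "f absolutely_integrable_on cbox l u"
    and w: "continuous_on UNIV w" "\<And>x. w x \<noteq> 0 \<Longrightarrow> x \<in> cbox l u" and sub: "cbox l u \<subseteq> \<Omega>"
  shows "(\<lambda>x. f x * w x :: real) integrable_on \<Omega>"
proof -
  have wc: "continuous_on (cbox l u) w" using w(1) continuous_on_subset by blast
  have m: "w \<in> borel_measurable (lebesgue_on (cbox l u))"
    by (rule continuous_imp_measurable_on_sets_lebesgue[OF wc]) simp
  have bd: "bounded (w ` cbox l u)" by (rule compact_imp_bounded[OF compact_continuous_image[OF wc compact_cbox]])
  have "(\<lambda>x. w x * f x) absolutely_integrable_on cbox l u"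
    by (rule absolutely_integrable_bounded_measurable_product[OF bilinear_times m _ bd f]) simp
  then have "(\<lambda>x. f x * w x) absolutely_integrable_on cbox l u"
    by (simp add: mult.commute)
  then have "(\<lambda>x. f x * w x) integrable_on cbox l u"
    using absolutely_integrable_on_def by blast
  then show ?thesis by (rule integrable_on_superset) (use w(2) sub in auto)
qed

lemma G_absint:
  assumes adm: "cap_admissible F0 F1 \<Omega> v G" and sub: "cbox l u \<subseteq> \<Omega>"
  shows "(\<lambda>x. G x \<bullet> e) absolutely_integrable_on cbox l u" "(\<lambda>x. norm (G x)) absolutely_integrable_on cbox l u"
proof -
  have wg: "weak_gradient \<Omega> v G" using adm by (simp add: cap_admissible_def)
  have "G absolutely_integrable_on cbox l u"
    using wg compact_cbox sub unfolding weak_gradient_def by blast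
  then show "(\<lambda>x. G x \<bullet> e) absolutely_integrable_on cbox l u" "(\<lambda>x. norm (G x)) absolutely_integrable_on cbox l u"
    using absolutely_integrable_component absolutely_integrable_norm[unfolded o_def] by blast+
qed

lemma st_diff_zero:
  assumes "0 < w" "0 < w'" "st c w t - st c' w' t \<noteq> 0"
  shows "min c c' \<le> t \<and> t \<le> max (c+w) (c'+w')"
proof (rule ccontr)
  assume "\<not> ?thesis"
  then have "t < min c c' \<or> max (c+w) (c'+w') < t" by auto
  then show False
  proof
    assume "t < min c c'"
    then show False using assms st_zero[of w t c] st_zero[of w' t c'] by simp
  next
    assume "max (c+w) (c'+w') < t"
    then show False using assms st_one[of w c t] st_one[of w' c' t] by simp
  qed
qed

lemma core_step:
  assumes adm: "cap_admissible F0 F1 \<Omega> v G" and ij: "i \<noteq> j"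
    and w: "0 < w" "0 < w'"
    and b: "sm b" "\<forall>t. 0 \<le> b t" "\<forall>t. b t \<noteq> 0 \<longrightarrow> q \<le> t \<and> t \<le> q'"
    and chi: "continuous_on UNIV ch" "\<forall>t. 0 \<le> ch t"
      "\<forall>t. min c c' \<le> t \<and> t \<le> max (c+w) (c'+w') \<longrightarrow> 1 \<le> ch t"
      "\<forall>t. ch t \<noteq> 0 \<longrightarrow> p \<le> t \<and> t \<le> p'"
    and box: "cbox (bl i p q) (bl i p' q') \<subseteq> \<Omega>"
  shows "\<bar>integral \<Omega> (\<lambda>x. v x * W i j (rb c w) b x) - integral \<Omega> (\<lambda>x. v x * W i j (rb c' w') b x)\<bar>
          \<le> integral \<Omega> (\<lambda>x. norm (G x) * W i j ch b x)"
proof -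
  define \<phi> where "\<phi> t = st c w t - st c' w' t" for t
  have smphi: "sm \<phi>" unfolding \<phi>_def by (intro sm_diff sm_st)
  have dphi: "\<forall>t. (\<phi> has_real_derivative (rb c w t - rb c' w' t)) (at t)"
    unfolding \<phi>_def using st_deriv w by (auto intro!: derivative_eq_intros)
  have phisupp: "\<phi> t \<noteq> 0 \<Longrightarrow> p \<le> t \<and> t \<le> p'" for t
  proof -
    assume "\<phi> t \<noteq> 0"
    then have "1 \<le> ch t" using st_diff_zero[OF w, of c t c'] chi(3) unfolding \<phi>_def by blast
    then have "ch t \<noteq> 0" by simp
    then show ?thesis using chi(4) by blast
  qed
  have phile: "\<bar>\<phi> t\<bar> \<le> ch t" for t
  proof (cases "\<phi> t = 0")
    case True then show ?thesis using chi(2) by simp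
  next
    case False
    then have "1 \<le> ch t" using st_diff_zero[OF w, of c t c'] chi(3) unfolding \<phi>_def by blast
    moreover have "\<bar>\<phi> t\<bar> \<le> 1" unfolding \<phi>_def using st_bounds[of c w t] st_bounds[of c' w' t] by auto
    ultimately show ?thesis by simp
  qed
  have rbsupp: "rb c1 w1 t \<noteq> 0 \<Longrightarrow> min c c' \<le> t \<and> t \<le> max (c+w) (c'+w')"
    if "(c1, w1) = (c, w) \<or> (c1, w1) = (c', w')" for c1 w1 t
  proof -
    assume r: "rb c1 w1 t \<noteq> 0"
    from that show ?thesis
    proof
      assume "(c1, w1) = (c, w)"
      then have "rb c w t \<noteq> 0" using r by simp
      then have "c < t \<and> t < c + w" using rb_zero[OF w(1), of t c] by (meson not_le)
      then show ?thesis by linarith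
    next
      assume "(c1, w1) = (c', w')"
      then have "rb c' w' t \<noteq> 0" using r by simp
      then have "c' < t \<and> t < c' + w'" using rb_zero[OF w(2), of t c'] by (meson not_le)
      then show ?thesis by linarith
    qed
  qed
  have rbsupp2: "rb c1 w1 t \<noteq> 0 \<Longrightarrow> p \<le> t \<and> t \<le> p'"
    if "(c1, w1) = (c, w) \<or> (c1, w1) = (c', w')" for c1 w1 t
  proof -
    assume "rb c1 w1 t \<noteq> 0"
    then have "1 \<le> ch t" using rbsupp[OF that, of t] chi(3) by blast
    then have "ch t \<noteq> 0" by simp
    then show ?thesis using chi(4) by blast
  qed
  have tf: "test_fun \<Omega> (W i j \<phi> b)"
    by (rule test_fun_W[OF ij smphi b(1) phisupp _ box]) (use b(3) in auto)
  have eB: "axis i (1::real) \<in> Basis" by simp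
  from adm have wg: "weak_gradient \<Omega> v G" by (simp add: cap_admissible_def)
  have ident: "integral \<Omega> (\<lambda>x. v x * frechet_derivative (W i j \<phi> b) (at x) (axis i 1))
       = - integral \<Omega> (\<lambda>x. (G x \<bullet> axis i 1) * W i j \<phi> b x)"
    using wg tf eB unfolding weak_gradient_def by blast
  obtain b' where b': "\<forall>t. (b has_real_derivative b' t) (at t)" using sm_deriv[OF b(1)] by blast
  have fd: "frechet_derivative (W i j \<phi> b) (at x) (axis i 1) = W i j (rb c w) b x - W i j (rb c' w') b x" for x
  proof -
    have "frechet_derivative (W i j \<phi> b) (at x) = (\<lambda>h. (rb c w (x$i) - rb c' w' (x$i)) * h$i * b (x$j) + \<phi> (x$i) * (b' (x$j) * h$j))"
      using frechet_derivative_at[OF W_deriv[OF dphi b', of i j x]] by simp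
    then show ?thesis using ij by (simp add: W_def axis_def algebra_simps)
  qed
  have cont_rb: "continuous_on UNIV (rb c1 w1)" for c1 w1 by (rule sm_cont[OF sm_rb])
  have cont_b: "continuous_on UNIV b" by (rule sm_cont[OF b(1)])
  have supW: "W i j (rb c1 w1) b x \<noteq> 0 \<Longrightarrow> x \<in> cbox (bl i p q) (bl i p' q')"
    if "(c1, w1) = (c, w) \<or> (c1, w1) = (c', w')" for c1 w1 x
    using rbsupp2[OF that] b(3) by (auto simp: W_def mem_bl[OF ij])
  have i1: "(\<lambda>x. v x * W i j (rb c w) b x) integrable_on \<Omega>"
    by (rule int_vw[OF adm W_cont[OF cont_rb cont_b] supW box]) auto
  have i2: "(\<lambda>x. v x * W i j (rb c' w') b x) integrable_on \<Omega>"
    by (rule int_vw[OF adm W_cont[OF cont_rb cont_b] supW box]) auto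
  have lhs: "integral \<Omega> (\<lambda>x. v x * W i j (rb c w) b x) - integral \<Omega> (\<lambda>x. v x * W i j (rb c' w') b x)
      = - integral \<Omega> (\<lambda>x. (G x \<bullet> axis i 1) * W i j \<phi> b x)"
    using ident integral_diff[OF i1 i2] by (simp add: fd algebra_simps)
  have supphi: "W i j \<phi> b x \<noteq> 0 \<Longrightarrow> x \<in> cbox (bl i p q) (bl i p' q')" for x
    using phisupp b(3) by (auto simp: W_def mem_bl[OF ij])
  have supchi: "W i j ch b x \<noteq> 0 \<Longrightarrow> x \<in> cbox (bl i p q) (bl i p' q')" for x
    using chi(4) b(3) by (auto simp: W_def mem_bl[OF ij])
  have i3: "(\<lambda>x. (G x \<bullet> axis i 1) * W i j \<phi> b x) integrable_on \<Omega>"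
    by (rule int_fw[OF G_absint(1)[OF adm box] W_cont[OF sm_cont[OF smphi] cont_b] supphi box])
  have i4: "(\<lambda>x. norm (G x) * W i j ch b x) integrable_on \<Omega>"
    by (rule int_fw[OF G_absint(2)[OF adm box] W_cont[OF chi(1) cont_b] supchi box])
  have "norm (integral \<Omega> (\<lambda>x. (G x \<bullet> axis i 1) * W i j \<phi> b x)) \<le> integral \<Omega> (\<lambda>x. norm (G x) * W i j ch b x)"
  proof (rule integral_norm_bound_integral[OF i3 i4])
    fix x
    have "\<bar>G x \<bullet> axis i 1\<bar> \<le> norm (G x)" using Basis_le_norm[OF eB] .
    moreover have "\<bar>W i j \<phi> b x\<bar> \<le> W i j ch b x"
      using phile[of "x$i"] b(2) by (simp add: W_def abs_mult mult_right_mono)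
    ultimately show "norm ((G x \<bullet> axis i 1) * W i j \<phi> b x) \<le> norm (G x) * W i j ch b x"
      by (simp add: abs_mult mult_mono)
  qed
  then show ?thesis using lhs by simp
qed



lemma amgm:
  assumes adm: "cap_admissible F0 F1 \<Omega> v G"
    and i1: "(\<lambda>x. norm (G x) * h x) integrable_on \<Omega>" and i2: "(\<lambda>x. (h x)^2) integrable_on \<Omega>"
    and l: "0 < l"
  shows "integral \<Omega> (\<lambda>x. norm (G x) * h x) \<le>
     (l * integral \<Omega> (\<lambda>x. norm (G x)^2) + integral \<Omega> (\<lambda>x. (h x)^2) / l) / 2"
proof -
  have iG: "(\<lambda>x. norm (G x)^2) integrable_on \<Omega>" using adm by (simp add: cap_admissible_def)
  have ir: "(\<lambda>x. (l/2) * norm (G x)^2 + (1/(2*l)) * (h x)^2) integrable_on \<Omega>"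
    by (intro integrable_add integrable_on_mult_right iG i2)
  have "integral \<Omega> (\<lambda>x. norm (G x) * h x) \<le> integral \<Omega> (\<lambda>x. (l/2) * norm (G x)^2 + (1/(2*l)) * (h x)^2)"
  proof (rule integral_le[OF i1 ir])
    fix x
    have "0 \<le> (l * norm (G x) - h x)^2" by simp
    then have "2 * l * (norm (G x) * h x) \<le> l * (l * norm (G x)^2) + (h x)^2"
      by (simp add: power2_eq_square algebra_simps)
    then show "norm (G x) * h x \<le> (l/2) * norm (G x)^2 + (1/(2*l)) * (h x)^2"
      using l by (simp add: field_simps)
  qed
  also have "\<dots> = (l * integral \<Omega> (\<lambda>x. norm (G x)^2) + integral \<Omega> (\<lambda>x. (h x)^2) / l) / 2"
    using iG i2 l by (simp add: integral_add integrable_on_mult_right field_simps)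
  finally show ?thesis .
qed

lemma cap_lower:
  assumes Q: "0 < Q"
    and main: "\<And>v G. cap_admissible F0 F1 \<Omega> v G \<Longrightarrow>
        Q \<le> integral \<Omega> (\<lambda>x. norm (G x) * h x) \<and> (\<lambda>x. norm (G x) * h x) integrable_on \<Omega>"
    and i2: "(\<lambda>x. (h x)^2) integrable_on \<Omega>"
  shows "cap F0 F1 \<Omega> > ereal (Q^2 / (2 * (integral \<Omega> (\<lambda>x. (h x)^2) + 1)))"
proof -
  define H where "H = integral \<Omega> (\<lambda>x. (h x)^2)"
  have H0: "0 \<le> H" unfolding H_def by (rule integral_nonneg[OF i2]) simp
  have bound: "Q^2 / (H + 1) \<le> integral \<Omega> (\<lambda>x. norm (G x)^2)" if adm: "cap_admissible F0 F1 \<Omega> v G" for v G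
  proof -
    define E where "E = integral \<Omega> (\<lambda>x. norm (G x)^2)"
    define l where "l = (H + 1) / Q"
    have l: "0 < l" using Q H0 by (simp add: l_def)
    from main[OF adm] have m: "Q \<le> integral \<Omega> (\<lambda>x. norm (G x) * h x)"
      and i1: "(\<lambda>x. norm (G x) * h x) integrable_on \<Omega>" by auto
    have "Q \<le> (l * E + H / l) / 2"
      using m amgm[OF adm i1 i2 l] by (simp add: E_def H_def)
    then have "2 * Q \<le> (H + 1) / Q * E + H * Q / (H + 1)"
      by (simp add: l_def field_simps)
    moreover have "H * Q / (H + 1) \<le> Q" using H0 Q by (simp add: field_simps)
    ultimately have "Q \<le> (H + 1) / Q * E" by simp
    then have "Q * Q \<le> (H + 1) * E" using Q by (simp add: field_simps)
    then show ?thesis using H0 by (simp add: E_def field_simps power2_eq_square)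
  qed
  have "ereal (Q^2 / (H + 1)) \<le> cap F0 F1 \<Omega>"
    unfolding cap_def by (rule Inf_greatest) (auto intro: bound)
  moreover have "Q^2 / (2 * (H + 1)) < Q^2 / (H + 1)"
  proof -
    have "0 < Q^2 / (H + 1)" using Q H0 by simp
    moreover have e: "Q^2 / (2 * (H + 1)) = (Q^2 / (H + 1)) / 2" by simp
    moreover have "\<And>y::real. 0 < y \<Longrightarrow> y / 2 < y" by simp
    ultimately show ?thesis unfolding e by blast
  qed
  ultimately have "ereal (Q^2 / (2 * (H + 1))) < cap F0 F1 \<Omega>"
    using less_le_trans[of "ereal (Q^2 / (2 * (H + 1)))" "ereal (Q^2 / (H + 1))"] by simp
  then show ?thesis unfolding H_def .
qed



definition Dc :: "R2 set \<Rightarrow> (R2 \<Rightarrow> real) \<Rightarrow> bool" where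
  "Dc \<Omega> h \<longleftrightarrow> continuous_on UNIV h \<and> (\<forall>x. 0 \<le> h x) \<and> (\<exists>K. compact K \<and> K \<subseteq> \<Omega> \<and> (\<forall>x. h x \<noteq> 0 \<longrightarrow> x \<in> K))"

lemma Dc_add: assumes "Dc \<Omega> h1" "Dc \<Omega> h2" shows "Dc \<Omega> (\<lambda>x. h1 x + h2 x)"
proof -
  obtain K1 where K1: "compact K1" "K1 \<subseteq> \<Omega>" "\<forall>x. h1 x \<noteq> 0 \<longrightarrow> x \<in> K1" using assms(1) by (auto simp: Dc_def)
  obtain K2 where K2: "compact K2" "K2 \<subseteq> \<Omega>" "\<forall>x. h2 x \<noteq> 0 \<longrightarrow> x \<in> K2" using assms(2) by (auto simp: Dc_def)
  have "\<forall>x. h1 x + h2 x \<noteq> 0 \<longrightarrow> x \<in> K1 \<union> K2" using K1(3) K2(3) by force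
  moreover have "continuous_on UNIV (\<lambda>x. h1 x + h2 x)" using assms by (auto simp: Dc_def intro: continuous_on_add)
  moreover have "\<forall>x. 0 \<le> h1 x + h2 x" using assms unfolding Dc_def by (simp add: add_nonneg_nonneg)
  moreover have "compact (K1 \<union> K2)" "K1 \<union> K2 \<subseteq> \<Omega>" using K1 K2 by auto
  ultimately show ?thesis unfolding Dc_def by blast
qed

lemma Dc_zero: "Dc \<Omega> (\<lambda>x. 0)"
  unfolding Dc_def by (auto intro: exI[of _ "{}"])

lemma Dc_sum: "(\<And>k. k \<in> A \<Longrightarrow> Dc \<Omega> (h k)) \<Longrightarrow> Dc \<Omega> (\<lambda>x. \<Sum>k\<in>A. h k x)"
proof (induction A rule: infinite_finite_induct)
  case (infinite A) then show ?case by (simp add: Dc_zero)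
next
  case empty then show ?case by (simp add: Dc_zero)
next
  case (insert a A) then show ?case by (simp add: Dc_add)
qed

lemma Dc_W:
  assumes ij: "i \<noteq> j" and ch: "continuous_on UNIV ch" "\<forall>t. 0 \<le> ch t" "\<forall>t. ch t \<noteq> 0 \<longrightarrow> p \<le> t \<and> t \<le> p'"
    and b: "continuous_on UNIV b" "\<forall>t. 0 \<le> b t" "\<forall>t. b t \<noteq> 0 \<longrightarrow> q \<le> t \<and> t \<le> q'"
    and box: "cbox (bl i p q) (bl i p' q') \<subseteq> \<Omega>"
  shows "Dc \<Omega> (W i j ch b)"
  unfolding Dc_def
proof (intro conjI exI[of _ "cbox (bl i p q) (bl i p' q')"] allI impI)
  show "continuous_on UNIV (W i j ch b)" by (rule W_cont[OF ch(1) b(1)])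
  show "0 \<le> W i j ch b x" for x using ch(2) b(2) by (simp add: W_def)
  show "x \<in> cbox (bl i p q) (bl i p' q')" if "W i j ch b x \<noteq> 0" for x
    using that ch(3) b(3) by (auto simp: W_def mem_bl[OF ij])
qed (use box in auto)

lemma int_fwK:
  assumes f: "f absolutely_integrable_on K" and K: "compact K" "K \<subseteq> \<Omega>"
    and w: "continuous_on UNIV w" "\<And>x. w x \<noteq> 0 \<Longrightarrow> x \<in> K"
  shows "(\<lambda>x. f x * w x :: real) integrable_on \<Omega>"
proof -
  have wc: "continuous_on K w" using w(1) continuous_on_subset by blast
  have Kl: "K \<in> sets lebesgue" using lmeasurable_compact[OF K(1)] by (simp add: fmeasurableD)
  have m: "w \<in> borel_measurable (lebesgue_on K)"
    by (rule continuous_imp_measurable_on_sets_lebesgue[OF wc Kl])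
  have bd: "bounded (w ` K)" by (rule compact_imp_bounded[OF compact_continuous_image[OF wc K(1)]])
  have "(\<lambda>x. w x * f x) absolutely_integrable_on K"
    by (rule absolutely_integrable_bounded_measurable_product[OF bilinear_times m Kl bd f])
  then have "(\<lambda>x. f x * w x) absolutely_integrable_on K"
    by (simp add: mult.commute)
  then have "(\<lambda>x. f x * w x) integrable_on K"
    using absolutely_integrable_on_def by blast
  then show ?thesis by (rule integrable_on_superset) (use w(2) K in auto)
qed

lemma Dc_int:
  assumes adm: "cap_admissible F0 F1 \<Omega> v G" and D: "Dc \<Omega> h"
  shows "(\<lambda>x. norm (G x) * h x) integrable_on \<Omega>"
proof -
  obtain K where K: "compact K" "K \<subseteq> \<Omega>" "\<forall>x. h x \<noteq> 0 \<longrightarrow> x \<in> K" using D by (auto simp: Dc_def)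
  have wg: "weak_gradient \<Omega> v G" using adm by (simp add: cap_admissible_def)
  have "G absolutely_integrable_on K" using wg K unfolding weak_gradient_def by blast
  from absolutely_integrable_norm[OF this] have "(\<lambda>x. norm (G x)) absolutely_integrable_on K" by (simp add: o_def)
  then show ?thesis using int_fwK[OF _ K(1,2), of "\<lambda>x. norm (G x)" h] D K(3) by (auto simp: Dc_def)
qed

lemma Dc_sq:
  assumes D: "Dc \<Omega> h" shows "(\<lambda>x. (h x)^2) integrable_on \<Omega>"
proof -
  obtain K where K: "compact K" "K \<subseteq> \<Omega>" "\<forall>x. h x \<noteq> 0 \<longrightarrow> x \<in> K" using D by (auto simp: Dc_def)
  obtain a where a: "K \<subseteq> cbox (-a) a" using bounded_subset_cbox_symmetric[OF compact_imp_bounded[OF K(1)]] by blast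
  have c: "continuous_on UNIV (\<lambda>x. (h x)^2)" using D by (auto simp: Dc_def intro: continuous_on_power)
  have "(\<lambda>x. (h x)^2) integrable_on cbox (-a) a"
    by (rule integrable_continuous[OF continuous_on_subset[OF c]]) auto
  then have u: "(\<lambda>x. (h x)^2) integrable_on UNIV"
    by (rule integrable_on_superset) (use K(3) a in auto)
  have "(\<lambda>x. if x \<in> \<Omega> then (h x)^2 else 0) = (\<lambda>x. (h x)^2)"
    using K by (auto simp: fun_eq_iff)
  with u show ?thesis using integrable_restrict_UNIV[of \<Omega> "\<lambda>x. (h x)^2"] by simp
qed

lemma norm_l1: "norm (u - y :: R2) \<le> \<bar>u$1 - y$1\<bar> + \<bar>u$2 - y$2\<bar>"
  using norm_le_l1_cart[of "u - y"] by (simp add: UNIV_2)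

lemma gstep:
  assumes adm: "cap_admissible F0 F1 \<Omega> v G" and ij: "i \<noteq> j"
    and pos: "0 < w" "0 < w'" "0 < s'" "0 < e"
    and box: "\<And>y. min c c' - e \<le> y$i \<Longrightarrow> y$i \<le> max (c+w) (c'+w') + e \<Longrightarrow> d \<le> y$j \<Longrightarrow> y$j \<le> d + s' \<Longrightarrow> y \<in> \<Omega>"
  shows "\<bar>integral \<Omega> (\<lambda>x. v x * W i j (rb c w) (rb d s') x) - integral \<Omega> (\<lambda>x. v x * W i j (rb c' w') (rb d s') x)\<bar>
          \<le> integral \<Omega> (\<lambda>x. norm (G x) * W i j (tz (min c c') (max (c+w) (c'+w')) e) (rb d s') x)"
    and "Dc \<Omega> (W i j (tz (min c c') (max (c+w) (c'+w')) e) (rb d s'))"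
proof -
  let ?ch = "tz (min c c') (max (c+w) (c'+w')) e"
  have b3: "\<forall>t. rb d s' t \<noteq> 0 \<longrightarrow> d \<le> t \<and> t \<le> d + s'"
  proof (intro allI impI)
    fix t assume "rb d s' t \<noteq> 0"
    then have "\<not> (t \<le> d \<or> d + s' \<le> t)" using rb_zero[OF pos(3)] by blast
    then show "d \<le> t \<and> t \<le> d + s'" by linarith
  qed
  have b: "sm (rb d s')" "\<forall>t. 0 \<le> rb d s' t" "\<forall>t. rb d s' t \<noteq> 0 \<longrightarrow> d \<le> t \<and> t \<le> d + s'"
    using sm_rb rb_nonneg[OF pos(3)] b3 by auto
  have ch4: "\<forall>t. ?ch t \<noteq> 0 \<longrightarrow> min c c' - e \<le> t \<and> t \<le> max (c+w) (c'+w') + e"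
  proof (intro allI impI)
    fix t assume "?ch t \<noteq> 0"
    then have "\<not> (t \<le> min c c' - e \<or> max (c+w) (c'+w') + e \<le> t)" using tz_zero[OF pos(4)] by blast
    then show "min c c' - e \<le> t \<and> t \<le> max (c+w) (c'+w') + e" by linarith
  qed
  have ch1: "continuous_on UNIV ?ch" using tz_cont pos(4) by simp
  have ch: "continuous_on UNIV ?ch" "\<forall>t. 0 \<le> ?ch t"
    "\<forall>t. min c c' \<le> t \<and> t \<le> max (c+w) (c'+w') \<longrightarrow> 1 \<le> ?ch t"
    "\<forall>t. ?ch t \<noteq> 0 \<longrightarrow> min c c' - e \<le> t \<and> t \<le> max (c+w) (c'+w') + e"
    using ch1 ch4 tz_nonneg tz_one[OF pos(4)] by auto
  have bx: "cbox (bl i (min c c' - e) d) (bl i (max (c+w) (c'+w') + e) (d + s')) \<subseteq> \<Omega>"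
    using box by (auto simp: mem_bl[OF ij])
  show "\<bar>integral \<Omega> (\<lambda>x. v x * W i j (rb c w) (rb d s') x) - integral \<Omega> (\<lambda>x. v x * W i j (rb c' w') (rb d s') x)\<bar>
          \<le> integral \<Omega> (\<lambda>x. norm (G x) * W i j ?ch (rb d s') x)"
    by (rule core_step[OF adm ij pos(1,2) b ch bx])
  show "Dc \<Omega> (W i j ?ch (rb d s'))"
    by (rule Dc_W[OF ij ch(1,2,4) sm_cont[OF b(1)] b(2,3) bx])
qed



lemma gstep_Dc:
  assumes ij: "i \<noteq> j" and pos: "0 < s'" "0 < e"
    and box: "\<And>y. min c c' - e \<le> y$i \<Longrightarrow> y$i \<le> max (c+w) (c'+w') + e \<Longrightarrow> d \<le> y$j \<Longrightarrow> y$j \<le> d + s' \<Longrightarrow> y \<in> \<Omega>"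
  shows "Dc \<Omega> (W i j (tz (min c c') (max (c+w) (c'+w')) e) (rb d s'))"
proof -
  let ?ch = "tz (min c c') (max (c+w) (c'+w')) e"
  have b3: "\<forall>t. rb d s' t \<noteq> 0 \<longrightarrow> d \<le> t \<and> t \<le> d + s'"
  proof (intro allI impI)
    fix t assume "rb d s' t \<noteq> 0"
    then have "\<not> (t \<le> d \<or> d + s' \<le> t)" using rb_zero[OF pos(1)] by blast
    then show "d \<le> t \<and> t \<le> d + s'" by linarith
  qed
  have ch4: "\<forall>t. ?ch t \<noteq> 0 \<longrightarrow> min c c' - e \<le> t \<and> t \<le> max (c+w) (c'+w') + e"
  proof (intro allI impI)
    fix t assume "?ch t \<noteq> 0"
    then have "\<not> (t \<le> min c c' - e \<or> max (c+w) (c'+w') + e \<le> t)" using tz_zero[OF pos(2)] by blast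
    then show "min c c' - e \<le> t \<and> t \<le> max (c+w) (c'+w') + e" by linarith
  qed
  have ch1: "continuous_on UNIV ?ch" using tz_cont pos(2) by simp
  have bx: "cbox (bl i (min c c' - e) d) (bl i (max (c+w) (c'+w') + e) (d + s')) \<subseteq> \<Omega>"
    using box by (auto simp: mem_bl[OF ij])
  show ?thesis
    by (rule Dc_W[OF ij ch1 _ ch4 sm_cont[OF sm_rb] _ b3 bx]) (auto simp: tz_nonneg rb_nonneg[OF pos(1)])
qed

definition Wst :: "real \<Rightarrow> R2 \<Rightarrow> R2 \<Rightarrow> real" where
  "Wst s y = W 1 2 (rb (y$1) s) (rb (y$2) s)"

definition hstep :: "real \<Rightarrow> R2 \<Rightarrow> R2 \<Rightarrow> R2 \<Rightarrow> real" where
  "hstep s y z = (\<lambda>x. W 1 2 (tz (min (y$1) (z$1)) (max (y$1+s) (z$1+s)) s) (rb (y$2) s) x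
     + W 2 1 (tz (min (y$2) (z$2)) (max (y$2+s) (z$2+s)) s) (rb (z$1) s) x)"

lemma in_cball_l1: "cball (y::R2) R \<subseteq> \<Omega> \<Longrightarrow> \<bar>u$1 - y$1\<bar> + \<bar>u$2 - y$2\<bar> \<le> R \<Longrightarrow> u \<in> \<Omega>"
  using norm_l1[of u y] by (auto simp: dist_norm norm_minus_commute subset_iff)

lemma hstep_boxes:
  fixes y z :: R2
  assumes s: "0 < s" and hb: "cball y (6 * s) \<subseteq> \<Omega>" and yz: "norm (z - y) \<le> s"
  shows "\<And>u. min (y$1) (z$1) - s \<le> u$1 \<Longrightarrow> u$1 \<le> max (y$1+s) (z$1+s) + s \<Longrightarrow> y$2 \<le> u$2 \<Longrightarrow> u$2 \<le> y$2 + s \<Longrightarrow> u \<in> \<Omega>"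
    and "\<And>u. min (y$2) (z$2) - s \<le> u$2 \<Longrightarrow> u$2 \<le> max (y$2+s) (z$2+s) + s \<Longrightarrow> z$1 \<le> u$1 \<Longrightarrow> u$1 \<le> z$1 + s \<Longrightarrow> u \<in> \<Omega>"
proof -
  have z1: "\<bar>z$1 - y$1\<bar> \<le> s" using component_le_norm_cart[of "z - y" 1] yz by simp
  have z2: "\<bar>z$2 - y$2\<bar> \<le> s" using component_le_norm_cart[of "z - y" 2] yz by simp
  show "u \<in> \<Omega>" if "min (y$1) (z$1) - s \<le> u$1" "u$1 \<le> max (y$1+s) (z$1+s) + s" "y$2 \<le> u$2" "u$2 \<le> y$2 + s" for u
  proof (rule in_cball_l1[OF hb])
    have "\<bar>u$1 - y$1\<bar> \<le> 3 * s" using that z1 by (auto simp: abs_le_iff min_def max_def split: if_splits)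
    moreover have "\<bar>u$2 - y$2\<bar> \<le> s" using that by auto
    ultimately show "\<bar>u$1 - y$1\<bar> + \<bar>u$2 - y$2\<bar> \<le> 6 * s" using s by linarith
  qed
  show "u \<in> \<Omega>" if "min (y$2) (z$2) - s \<le> u$2" "u$2 \<le> max (y$2+s) (z$2+s) + s" "z$1 \<le> u$1" "u$1 \<le> z$1 + s" for u
  proof (rule in_cball_l1[OF hb])
    have "\<bar>u$2 - y$2\<bar> \<le> 3 * s" using that z2 by (auto simp: abs_le_iff min_def max_def split: if_splits)
    moreover have "\<bar>u$1 - y$1\<bar> \<le> 2 * s" using that z1 by (auto simp: abs_le_iff)
    ultimately show "\<bar>u$1 - y$1\<bar> + \<bar>u$2 - y$2\<bar> \<le> 6 * s" using s by linarith
  qed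
qed

lemma hstep_Dc:
  fixes y z :: R2
  assumes s: "0 < s" and hb: "cball y (6 * s) \<subseteq> \<Omega>" and yz: "norm (z - y) \<le> s"
  shows "Dc \<Omega> (hstep s y z)"
proof -
  note bx = hstep_boxes[OF assms]
  have A: "Dc \<Omega> (W 1 2 (tz (min (y$1) (z$1)) (max (y$1+s) (z$1+s)) s) (rb (y$2) s))"
    by (rule gstep_Dc[of 1 2 s s, OF _ s s bx(1)]) auto
  have B: "Dc \<Omega> (W 2 1 (tz (min (y$2) (z$2)) (max (y$2+s) (z$2+s)) s) (rb (z$1) s))"
    by (rule gstep_Dc[of 2 1 s s, OF _ s s bx(2)]) auto
  show ?thesis unfolding hstep_def by (rule Dc_add[OF A B])
qed

lemma chain_step:
  fixes y z :: R2
  assumes adm: "cap_admissible F0 F1 \<Omega> v G"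
    and s: "0 < s" and hb: "cball y (6 * s) \<subseteq> \<Omega>" and yz: "norm (z - y) \<le> s"
  shows "integral \<Omega> (\<lambda>x. v x * Wst s y x) \<le> integral \<Omega> (\<lambda>x. v x * Wst s z x) + integral \<Omega> (\<lambda>x. norm (G x) * hstep s y z x)"
proof -
  note bx = hstep_boxes[OF s hb yz]
  let ?h1 = "W 1 2 (tz (min (y$1) (z$1)) (max (y$1+s) (z$1+s)) s) (rb (y$2) s)"
  let ?h2 = "W 2 1 (tz (min (y$2) (z$2)) (max (y$2+s) (z$2+s)) s) (rb (z$1) s)"
  have A: "\<bar>integral \<Omega> (\<lambda>x. v x * W 1 2 (rb (y$1) s) (rb (y$2) s) x) - integral \<Omega> (\<lambda>x. v x * W 1 2 (rb (z$1) s) (rb (y$2) s) x)\<bar>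
     \<le> integral \<Omega> (\<lambda>x. norm (G x) * ?h1 x)"
    by (rule gstep(1)[OF adm _ s s s s bx(1)]) auto
  have B: "\<bar>integral \<Omega> (\<lambda>x. v x * W 2 1 (rb (y$2) s) (rb (z$1) s) x) - integral \<Omega> (\<lambda>x. v x * W 2 1 (rb (z$2) s) (rb (z$1) s) x)\<bar>
     \<le> integral \<Omega> (\<lambda>x. norm (G x) * ?h2 x)"
    by (rule gstep(1)[OF adm _ s s s s bx(2)]) auto
  have e1: "W 2 1 (rb (y$2) s) (rb (z$1) s) = W 1 2 (rb (z$1) s) (rb (y$2) s)"
    by (simp add: fun_eq_iff W_def mult.commute)
  have e2: "W 2 1 (rb (z$2) s) (rb (z$1) s) = Wst s z"
    by (simp add: fun_eq_iff W_def Wst_def mult.commute)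
  have D1: "Dc \<Omega> ?h1" by (rule gstep_Dc[of 1 2 s s, OF _ s s bx(1)]) auto
  have D2: "Dc \<Omega> ?h2" by (rule gstep_Dc[of 2 1 s s, OF _ s s bx(2)]) auto
  have "integral \<Omega> (\<lambda>x. norm (G x) * hstep s y z x) = integral \<Omega> (\<lambda>x. norm (G x) * ?h1 x + norm (G x) * ?h2 x)"
    by (simp add: hstep_def distrib_left)
  also have "\<dots> = integral \<Omega> (\<lambda>x. norm (G x) * ?h1 x) + integral \<Omega> (\<lambda>x. norm (G x) * ?h2 x)"
    by (rule integral_add[OF Dc_int[OF adm D1] Dc_int[OF adm D2]])
  finally have hs: "integral \<Omega> (\<lambda>x. norm (G x) * hstep s y z x) = integral \<Omega> (\<lambda>x. norm (G x) * ?h1 x) + integral \<Omega> (\<lambda>x. norm (G x) * ?h2 x)" .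
  show ?thesis using A B unfolding e1 e2 hs Wst_def by linarith
qed

lemma chain_Dc:
  assumes s: "0 < s" and hyp: "\<forall>k<N. cball (y k) (6 * s) \<subseteq> \<Omega> \<and> norm (y (Suc k) - y k) \<le> s"
  shows "Dc \<Omega> (\<lambda>x. \<Sum>k<N. hstep s (y k) (y (Suc k)) x)"
  by (rule Dc_sum) (use hyp hstep_Dc[OF s] in auto)

lemma chain:
  assumes adm: "cap_admissible F0 F1 \<Omega> v G"
    and s: "0 < s" and hyp: "\<forall>k<N. cball (y k) (6 * s) \<subseteq> \<Omega> \<and> norm (y (Suc k) - y k) \<le> s"
  shows "integral \<Omega> (\<lambda>x. v x * Wst s (y 0) x) \<le> integral \<Omega> (\<lambda>x. v x * Wst s (y N) x)
           + integral \<Omega> (\<lambda>x. norm (G x) * (\<Sum>k<N. hstep s (y k) (y (Suc k)) x))"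
  using hyp
proof (induction N)
  case 0 then show ?case by simp
next
  case (Suc N)
  then have IH: "integral \<Omega> (\<lambda>x. v x * Wst s (y 0) x) \<le> integral \<Omega> (\<lambda>x. v x * Wst s (y N) x)
           + integral \<Omega> (\<lambda>x. norm (G x) * (\<Sum>k<N. hstep s (y k) (y (Suc k)) x))" by simp
  have hN: "cball (y N) (6 * s) \<subseteq> \<Omega>" "norm (y (Suc N) - y N) \<le> s" using Suc.prems by auto
  have st: "integral \<Omega> (\<lambda>x. v x * Wst s (y N) x) \<le> integral \<Omega> (\<lambda>x. v x * Wst s (y (Suc N)) x)
      + integral \<Omega> (\<lambda>x. norm (G x) * hstep s (y N) (y (Suc N)) x)"
    by (rule chain_step[OF adm s hN])
  have D1: "Dc \<Omega> (\<lambda>x. \<Sum>k<N. hstep s (y k) (y (Suc k)) x)"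
    by (rule chain_Dc[OF s]) (use Suc.prems in auto)
  have D2: "Dc \<Omega> (hstep s (y N) (y (Suc N)))" by (rule hstep_Dc[OF s hN])
  have "integral \<Omega> (\<lambda>x. norm (G x) * (\<Sum>k<Suc N. hstep s (y k) (y (Suc k)) x))
     = integral \<Omega> (\<lambda>x. norm (G x) * (\<Sum>k<N. hstep s (y k) (y (Suc k)) x) + norm (G x) * hstep s (y N) (y (Suc N)) x)"
    by (simp add: distrib_left)
  also have "\<dots> = integral \<Omega> (\<lambda>x. norm (G x) * (\<Sum>k<N. hstep s (y k) (y (Suc k)) x)) + integral \<Omega> (\<lambda>x. norm (G x) * hstep s (y N) (y (Suc N)) x)"
    by (rule integral_add[OF Dc_int[OF adm D1] Dc_int[OF adm D2]])
  finally show ?case using IH st by linarith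
qed



lemma W_supp:
  assumes ij: "i \<noteq> j" and a: "\<And>t. a t \<noteq> 0 \<Longrightarrow> p \<le> t \<and> t \<le> p'" and b: "\<And>t. b t \<noteq> 0 \<Longrightarrow> q \<le> t \<and> t \<le> q'"
  shows "W i j a b x \<noteq> 0 \<Longrightarrow> x \<in> cbox (bl i p q) (bl i p' q')"
  using a b by (auto simp: W_def mem_bl[OF ij])

lemma bl_nth [simp]: "bl i p q $ i = p" "k \<noteq> i \<Longrightarrow> bl i p q $ k = q"
  by (simp_all add: bl_def)

lemma rb_supp: "0 < w \<Longrightarrow> rb c w t \<noteq> 0 \<Longrightarrow> c \<le> t \<and> t \<le> c + w"
proof -
  assume w: "0 < w" and "rb c w t \<noteq> 0"
  then have "\<not> (t \<le> c \<or> c + w \<le> t)" using rb_zero[OF w] by blast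
  then show ?thesis by linarith
qed

lemma int_UNIV_cbox:
  fixes f :: "R2 \<Rightarrow> real"
  assumes c: "continuous_on UNIV f" and s: "\<And>x. f x \<noteq> 0 \<Longrightarrow> x \<in> cbox l u"
  shows "(f has_integral integral (cbox l u) f) UNIV" "integral UNIV f = integral (cbox l u) f"
proof -
  have "(f has_integral integral (cbox l u) f) (cbox l u)"
    using integrable_continuous[OF continuous_on_subset[OF c]] by (simp add: integrable_integral)
  then show h: "(f has_integral integral (cbox l u) f) UNIV"
    by (rule has_integral_on_superset) (use s in auto)
  then show "integral UNIV f = integral (cbox l u) f" by (rule integral_unique)
qed

lemma rb_stretch: "0 < e \<Longrightarrow> rb t e (e * u + t) = rb 0 1 u / e"
  by (simp add: rb_def)

lemma stretch_int:
  assumes ij: "i \<noteq> j" and e: "0 < e" and psi: "continuous_on UNIV \<psi>" "\<And>t. \<psi> t \<noteq> 0 \<Longrightarrow> q \<le> t \<and> t \<le> q'"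
  shows "integral UNIV (W i j (rb t e) \<psi>) = integral UNIV (W i j (rb 0 1) \<psi>)"
proof -
  let ?f = "W i j (rb t e) \<psi>"
  let ?l = "bl i t q" and ?u = "bl i (t + e) q'"
  have fc: "continuous_on UNIV ?f" by (rule W_cont[OF sm_cont[OF sm_rb] psi(1)])
  have fs: "?f x \<noteq> 0 \<Longrightarrow> x \<in> cbox ?l ?u" for x
    by (rule W_supp[OF ij rb_supp[OF e] psi(2)])
  define I where "I = integral (cbox ?l ?u) ?f"
  have fI: "(?f has_integral I) (cbox ?l ?u)"
    using integrable_continuous[OF continuous_on_subset[OF fc]] by (simp add: integrable_integral I_def)
  have fU: "integral UNIV ?f = I" using int_UNIV_cbox[OF fc fs] by (simp add: I_def)
  define c :: R2 where "c = bl i t 0"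
  have g: "((\<lambda>x. ?f (x + c)) has_integral I) (cbox (?l - c) (?u - c))"
    by (rule has_integral_shift_cbox[OF fI])
  define m :: "2 \<Rightarrow> real" where "m k = (if k = i then e else 1)" for k
  have m0: "\<And>k. m k \<noteq> 0" using e by (simp add: m_def)
  have pm: "prod m UNIV = e"
  proof -
    have "prod m UNIV = m 1 * m 2" by (simp add: UNIV_2)
    moreover have "i = 1 \<or> i = 2" by (rule exhaust_2)
    moreover have "(1::2) \<noteq> 2" by simp
    ultimately show ?thesis by (auto simp: m_def)
  qed
  have st: "((\<lambda>x. ?f ((\<chi> k. m k * x$k) + c)) has_integral I /\<^sub>R \<bar>e\<bar>)
      ((\<lambda>x. \<chi> k. x$k / m k) ` cbox (?l - c) (?u - c))"
    using has_integral_stretch_cart[where m=m, OF g m0] by (simp add: pm)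
  have eq: "?f ((\<chi> k. m k * x$k) + c) = W i j (rb 0 1) \<psi> x / e" for x
    using ij e by (simp add: W_def m_def c_def bl_def rb_stretch mult.commute)
  have st2: "((\<lambda>x. W i j (rb 0 1) \<psi> x / e) has_integral I / e) ((\<lambda>x. \<chi> k. x$k / m k) ` cbox (?l - c) (?u - c))"
    using st e by (simp add: eq divide_inverse_commute)
  then have st3: "(W i j (rb 0 1) \<psi> has_integral I) ((\<lambda>x. \<chi> k. x$k / m k) ` cbox (?l - c) (?u - c))"
    using has_integral_mult_right[OF st2, of e] e by simp
  have "(W i j (rb 0 1) \<psi> has_integral I) UNIV"
  proof (rule has_integral_on_superset[OF st3])
    fix x assume nx: "x \<notin> (\<lambda>x. \<chi> k. x$k / m k) ` cbox (?l - c) (?u - c)"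
    show "W i j (rb 0 1) \<psi> x = 0"
    proof (rule ccontr)
      assume "W i j (rb 0 1) \<psi> x \<noteq> 0"
      then have "?f ((\<chi> k. m k * x$k) + c) \<noteq> 0" using e by (simp add: eq)
      then have "(\<chi> k. m k * x$k) + c \<in> cbox ?l ?u" by (rule fs)
      then have h: "\<forall>k. ?l$k \<le> m k * x$k + c$k \<and> m k * x$k + c$k \<le> ?u$k"
        by (simp add: mem_box_cart)
      have "\<forall>k. (?l - c)$k \<le> m k * x$k \<and> m k * x$k \<le> (?u - c)$k"
      proof
        fix k from h[rule_format, of k] show "(?l - c)$k \<le> m k * x$k \<and> m k * x$k \<le> (?u - c)$k" by simp
      qed
      then have "(\<chi> k. m k * x$k) \<in> cbox (?l - c) (?u - c)"
        by (simp add: mem_box_cart)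
      moreover have "x = (\<lambda>x. \<chi> k. x$k / m k) (\<chi> k. m k * x$k)" using m0 by (simp add: vec_eq_iff)
      ultimately show False using nx by blast
    qed
  qed auto
  then show ?thesis using fU by (simp add: integral_unique)
qed

lemma Q_pos:
  assumes ij: "i \<noteq> j" and a: "0 < a"
  shows "0 < integral UNIV (W i j (rb 0 1) (rb \<alpha> a))"
proof -
  let ?f = "W i j (rb 0 1) (rb \<alpha> a)"
  let ?l = "bl i 0 \<alpha>" and ?u = "bl i 1 (\<alpha> + a)"
  have fc: "continuous_on UNIV ?f" by (rule W_cont[OF sm_cont[OF sm_rb] sm_cont[OF sm_rb]])
  have fs: "?f x \<noteq> 0 \<Longrightarrow> x \<in> cbox ?l ?u" for x
    using W_supp[OF ij rb_supp[of 1 0] rb_supp[OF a]] by simp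
  have fn: "0 \<le> ?f x" for x using rb_nonneg[of 1] rb_nonneg[OF a] by (simp add: W_def)
  have U: "integral UNIV ?f = integral (cbox ?l ?u) ?f" by (rule int_UNIV_cbox(2)[OF fc fs])
  have int: "?f integrable_on cbox ?l ?u" by (rule integrable_continuous[OF continuous_on_subset[OF fc]]) auto
  have "0 \<le> integral (cbox ?l ?u) ?f" by (rule integral_nonneg[OF int]) (simp add: fn)
  moreover have "integral (cbox ?l ?u) ?f \<noteq> 0"
  proof
    assume z: "integral (cbox ?l ?u) ?f = 0"
    define xs where "xs = bl i (1/2) (\<alpha> + a/2)"
    have xin: "xs \<in> cbox ?l ?u" using a ij by (simp add: xs_def mem_bl[OF ij])
    have "xs \<in> box ?l ?u"
    proof -
      have q: "(\<forall>k. Q k) \<longleftrightarrow> Q i \<and> Q j" for Q using two_cases[OF ij] by metis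
      show ?thesis unfolding mem_box_cart q using a ij by (simp add: xs_def)
    qed
    then have ne: "box ?l ?u \<noteq> {}" by blast
    have "?f xs = 0"
      by (rule has_integral_0_cbox_imp_0[of ?l ?u ?f xs])
        (use continuous_on_subset[OF fc] fn integrable_integral[OF int] z ne xin in auto)
    moreover have "0 < ?f xs" using a ij
      by (simp add: W_def xs_def rb_pos)
    ultimately show False by simp
  qed
  ultimately show ?thesis using U by simp
qed



lemma int_Omega_cbox:
  fixes f :: "R2 \<Rightarrow> real"
  assumes c: "continuous_on UNIV f" and s: "\<And>x. f x \<noteq> 0 \<Longrightarrow> x \<in> cbox l u" and sub: "cbox l u \<subseteq> \<Omega>"
  shows "f integrable_on \<Omega>" "integral \<Omega> f = integral UNIV f"
proof -
  have i: "f integrable_on cbox l u" by (rule integrable_continuous[OF continuous_on_subset[OF c]]) auto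
  show "f integrable_on \<Omega>" by (rule integrable_on_superset[OF i]) (use s sub in auto)
  have "(\<lambda>x. if x \<in> \<Omega> then f x else 0) = f" using s sub by (auto simp: fun_eq_iff)
  then show "integral \<Omega> f = integral UNIV f" using integral_restrict_UNIV[of \<Omega> f] by simp
qed

lemma gamma_side:
  fixes x :: R2 and i j :: 2
  assumes adm: "cap_admissible F0 F1 \<Omega> v G"
    and ij: "i \<noteq> j" and a: "0 < a"
    and sq: "\<And>y. \<bar>y$i - x$i\<bar> \<le> 3 * a \<Longrightarrow> \<bar>y$j - x$j\<bar> \<le> 3 * a \<Longrightarrow> y \<in> \<Omega>"
    and al: "x$j - a \<le> \<alpha>" "\<alpha> \<le> x$j"
    and U: "open U" "\<And>y. y \<in> U \<Longrightarrow> y \<in> \<Omega> \<Longrightarrow> 1 \<le> v y"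
    and cross: "\<And>c. \<alpha> \<le> c \<Longrightarrow> c \<le> \<alpha> + a \<Longrightarrow> \<exists>q\<in>U. q$j = c \<and> \<bar>q$i - x$i\<bar> \<le> a"
  shows "integral UNIV (W i j (rb 0 1) (rb \<alpha> a))
     - integral \<Omega> (\<lambda>y. norm (G y) * W i j (tz (x$i - 2 * a) (x$i + 2 * a) a) (rb \<alpha> a) y)
     \<le> integral \<Omega> (\<lambda>y. v y * W i j (rb (x$i - a) (2 * a)) (rb \<alpha> a) y)"
proof -
  define S where "S = {\<alpha>..\<alpha>+a}"
  have ex: "\<forall>c\<in>S. \<exists>qe. fst qe \<in> U \<and> fst qe $ j = c \<and> \<bar>fst qe $ i - x$i\<bar> \<le> a \<and> 0 < snd qe \<and> snd qe \<le> a \<and> ball (fst qe) (snd qe) \<subseteq> U"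
  proof
    fix c assume "c \<in> S"
    then obtain q where q: "q \<in> U" "q$j = c" "\<bar>q$i - x$i\<bar> \<le> a" using cross by (auto simp: S_def)
    obtain r where r: "0 < r" "ball q r \<subseteq> U" using U(1) q(1) by (meson openE)
    have "ball q (min r a) \<subseteq> U" using r by auto
    then show "\<exists>qe. fst qe \<in> U \<and> fst qe $ j = c \<and> \<bar>fst qe $ i - x$i\<bar> \<le> a \<and> 0 < snd qe \<and> snd qe \<le> a \<and> ball (fst qe) (snd qe) \<subseteq> U"
      using q r a by (intro exI[of _ "(q, min r a)"]) auto
  qed
  then obtain QE where QE: "\<And>c. c \<in> S \<Longrightarrow> fst (QE c) \<in> U \<and> fst (QE c) $ j = c \<and> \<bar>fst (QE c) $ i - x$i\<bar> \<le> a \<and> 0 < snd (QE c) \<and> snd (QE c) \<le> a \<and> ball (fst (QE c)) (snd (QE c)) \<subseteq> U"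
    by metis
  define Qf where "Qf c = fst (QE c)" for c
  define Ef where "Ef c = snd (QE c)" for c
  have Qf: "Qf c \<in> U" "Qf c $ j = c" "\<bar>Qf c $ i - x$i\<bar> \<le> a" "0 < Ef c" "Ef c \<le> a" "ball (Qf c) (Ef c) \<subseteq> U"
    if "c \<in> S" for c using QE[OF that] by (auto simp: Qf_def Ef_def)
  have Sne: "(\<lambda>c. ball c (Ef c / 2)) ` S \<noteq> {}" using a by (auto simp: S_def)
  have Scov: "S \<subseteq> \<Union> ((\<lambda>c. ball c (Ef c / 2)) ` S)"
  proof
    fix c assume "c \<in> S" then show "c \<in> \<Union> ((\<lambda>c. ball c (Ef c / 2)) ` S)" using Qf(4)[of c] by force
  qed
  have cS: "compact S" by (simp add: S_def)
  have oB: "\<And>B. B \<in> (\<lambda>c. ball c (Ef c / 2)) ` S \<Longrightarrow> open B" by auto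
  obtain L where L: "0 < L" "\<And>T. T \<subseteq> S \<Longrightarrow> diameter T < L \<Longrightarrow> \<exists>B\<in>(\<lambda>c. ball c (Ef c / 2)) ` S. T \<subseteq> B"
    using Lebesgue_number_lemma[OF cS Sne Scov oB] by metis
  define w where "w = L / 3"
  have w: "0 < w" using L by (simp add: w_def)
  define e where "e k = \<alpha> - w + real k * w" for k :: nat
  define K where "K = nat (ceiling (a / w)) + 1"
  have eK: "\<alpha> + a \<le> e K"
  proof -
    have "a / w \<le> real (nat (ceiling (a / w)))" by linarith
    then have "a \<le> real (nat (ceiling (a / w))) * w" using w by (simp add: field_simps)
    then show ?thesis by (simp add: e_def K_def algebra_simps)
  qed
  have emono: "e k \<le> e (Suc k)" for k using w by (simp add: e_def algebra_simps)
  define chi where "chi k t = st (e k) w t - st (e (Suc k)) w t" for k t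
  define psi where "psi k t = rb \<alpha> a t * chi k t" for k t
  have chi_sum: "(\<Sum>k<K. chi k t) = st (e 0) w t - st (e K) w t" for t
    unfolding chi_def by (rule sum_lessThan_telescope')
  have psi_sum: "(\<Sum>k<K. psi k t) = rb \<alpha> a t" for t
  proof (cases "rb \<alpha> a t = 0")
    case True then show ?thesis by (simp add: psi_def)
  next
    case False
    then have t: "\<alpha> \<le> t" "t \<le> \<alpha> + a" using rb_supp[OF a] by auto
    have "st (e 0) w t = 1" using t w by (intro st_one) (auto simp: e_def)
    moreover have "st (e K) w t = 0" using t w eK by (intro st_zero) auto
    ultimately have "(\<Sum>k<K. chi k t) = 1" by (simp add: chi_sum)
    then show ?thesis by (simp add: psi_def sum_distrib_left[symmetric])
  qed
  have psi_nn: "0 \<le> psi k t" for k t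
    unfolding psi_def chi_def using rb_nonneg[OF a] st_anti[OF w emono] by simp
  have psi_sm: "sm (psi k)" for k
    unfolding psi_def chi_def by (intro sm_mult sm_rb sm_diff sm_st)
  have psi_supp: "\<alpha> \<le> t \<and> t \<le> \<alpha> + a \<and> e k \<le> t \<and> t \<le> e k + 2 * w" if "psi k t \<noteq> 0" for k t
  proof -
    have "rb \<alpha> a t \<noteq> 0" "chi k t \<noteq> 0" using that by (auto simp: psi_def)
    then have "\<alpha> \<le> t \<and> t \<le> \<alpha> + a" "min (e k) (e (Suc k)) \<le> t \<and> t \<le> max (e k + w) (e (Suc k) + w)"
      using rb_supp[OF a] st_diff_zero[OF w w] by (auto simp: chi_def)
    moreover have "e (Suc k) = e k + w" by (simp add: e_def algebra_simps)
    ultimately show ?thesis using w by (auto simp: min_def max_def)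
  qed
  have exc: "\<exists>c\<in>S. {t\<in>S. e k \<le> t \<and> t \<le> e k + 2 * w} \<subseteq> ball c (Ef c / 2)" for k
  proof -
    have "diameter {t\<in>S. e k \<le> t \<and> t \<le> e k + 2 * w} \<le> 2 * w"
      by (rule diameter_le) (use w in \<open>auto simp: dist_norm abs_le_iff\<close>)
    then have "diameter {t\<in>S. e k \<le> t \<and> t \<le> e k + 2 * w} < L" using w by (simp add: w_def)
    then show ?thesis using L(2)[of "{t\<in>S. e k \<le> t \<and> t \<le> e k + 2 * w}"] by auto
  qed
  then obtain C where C: "\<And>k. C k \<in> S" "\<And>k. {t\<in>S. e k \<le> t \<and> t \<le> e k + 2 * w} \<subseteq> ball (C k) (Ef (C k) / 2)"
    by metis
  define tk where "tk k = Qf (C k) $ i - Ef (C k) / 4" for k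
  define ek where "ek k = Ef (C k) / 4" for k
  have ek: "0 < ek k" for k using Qf(4)[OF C(1)] by (simp add: ek_def)
  let ?ch = "tz (x$i - 2 * a) (x$i + 2 * a) a"
  let ?c0 = "x$i - a" and ?w0 = "2 * a"
  have box: "cbox (bl i (x$i - 3 * a) \<alpha>) (bl i (x$i + 3 * a) (\<alpha> + a)) \<subseteq> \<Omega>"
  proof
    fix y assume "y \<in> cbox (bl i (x$i - 3 * a) \<alpha>) (bl i (x$i + 3 * a) (\<alpha> + a))"
    then have "x$i - 3 * a \<le> y$i" "y$i \<le> x$i + 3 * a" "\<alpha> \<le> y$j" "y$j \<le> \<alpha> + a" by (auto simp: mem_bl[OF ij])
    then show "y \<in> \<Omega>" using al a by (intro sq) auto
  qed
  have chc: "continuous_on UNIV ?ch" using tz_cont a by simp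
  have ch4: "\<forall>t. ?ch t \<noteq> 0 \<longrightarrow> x$i - 3 * a \<le> t \<and> t \<le> x$i + 3 * a"
  proof (intro allI impI)
    fix t assume "?ch t \<noteq> 0"
    then have "\<not> (t \<le> x$i - 2 * a - a \<or> x$i + 2 * a + a \<le> t)" using tz_zero[OF a] by blast
    then show "x$i - 3 * a \<le> t \<and> t \<le> x$i + 3 * a" by linarith
  qed
  have ch4': "\<And>t. ?ch t \<noteq> 0 \<Longrightarrow> x$i - 3 * a \<le> t \<and> t \<le> x$i + 3 * a" using ch4 by blast
  have psiab: "\<And>t. psi k t \<noteq> 0 \<Longrightarrow> \<alpha> \<le> t \<and> t \<le> \<alpha> + a" for k using psi_supp by blast
  have psisupp2: "\<forall>t. psi k t \<noteq> 0 \<longrightarrow> \<alpha> \<le> t \<and> t \<le> \<alpha> + a" for k using psi_supp by blast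
  have core: "\<bar>integral \<Omega> (\<lambda>y. v y * W i j (rb ?c0 ?w0) (psi k) y) - integral \<Omega> (\<lambda>y. v y * W i j (rb (tk k) (ek k)) (psi k) y)\<bar>
      \<le> integral \<Omega> (\<lambda>y. norm (G y) * W i j ?ch (psi k) y)" for k
  proof (rule core_step[OF adm ij _ ek psi_sm _ psisupp2 chc _ _ ch4 box])
    show "0 < 2 * a" using a by simp
    show "\<forall>t. 0 \<le> psi k t" using psi_nn by simp
    show "\<forall>t. 0 \<le> ?ch t" using tz_nonneg by simp
    have q: "\<bar>Qf (C k) $ i - x$i\<bar> \<le> a" "Ef (C k) \<le> a" using Qf(3,5)[OF C(1)] by auto
    show "\<forall>t. min (x$i - a) (tk k) \<le> t \<and> t \<le> max (x$i - a + 2 * a) (tk k + ek k) \<longrightarrow> 1 \<le> ?ch t"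
    proof (intro allI impI)
      fix t assume t: "min (x$i - a) (tk k) \<le> t \<and> t \<le> max (x$i - a + 2 * a) (tk k + ek k)"
      have "x$i - 2 * a \<le> t" using t q a by (auto simp: tk_def min_def abs_le_iff split: if_splits)
      moreover have "t \<le> x$i + 2 * a" using t q a by (auto simp: tk_def ek_def max_def abs_le_iff split: if_splits)
      ultimately show "1 \<le> ?ch t" using tz_one[OF a] by simp
    qed
  qed
  have main: "integral UNIV (W i j (rb 0 1) (psi k)) \<le> integral \<Omega> (\<lambda>y. v y * W i j (rb (tk k) (ek k)) (psi k) y)" for k
  proof -
    let ?f = "W i j (rb (tk k) (ek k)) (psi k)"
    have q: "\<bar>Qf (C k) $ i - x$i\<bar> \<le> a" "Ef (C k) \<le> a" "0 < Ef (C k)" "Qf (C k) $ j = C k"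
      "ball (Qf (C k)) (Ef (C k)) \<subseteq> U" using Qf[OF C(1)] by auto
    have fc: "continuous_on UNIV ?f" by (rule W_cont[OF sm_cont[OF sm_rb] sm_cont[OF psi_sm]])
    have fs: "?f y \<noteq> 0 \<Longrightarrow> y \<in> cbox (bl i (tk k) \<alpha>) (bl i (tk k + ek k) (\<alpha> + a))" for y
      by (rule W_supp[OF ij rb_supp[OF ek] psiab])
    have sub: "cbox (bl i (tk k) \<alpha>) (bl i (tk k + ek k) (\<alpha> + a)) \<subseteq> \<Omega>"
    proof
      fix y assume "y \<in> cbox (bl i (tk k) \<alpha>) (bl i (tk k + ek k) (\<alpha> + a))"
      then have "tk k \<le> y$i" "y$i \<le> tk k + ek k" "\<alpha> \<le> y$j" "y$j \<le> \<alpha> + a" by (auto simp: mem_bl[OF ij])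
      then show "y \<in> \<Omega>" using al a q by (intro sq) (auto simp: tk_def ek_def abs_le_iff)
    qed
    have io: "?f integrable_on \<Omega>" "integral \<Omega> ?f = integral UNIV ?f" using int_Omega_cbox[OF fc fs sub] by auto
    have ivf: "(\<lambda>y. v y * ?f y) integrable_on \<Omega>" by (rule int_vw[OF adm fc fs sub])
    have "integral \<Omega> ?f \<le> integral \<Omega> (\<lambda>y. v y * ?f y)"
    proof (rule integral_le[OF io(1) ivf])
      fix y assume yO: "y \<in> \<Omega>"
      show "?f y \<le> v y * ?f y"
      proof (cases "?f y = 0")
        case True then show ?thesis by simp
      next
        case False
        then have r: "rb (tk k) (ek k) (y$i) \<noteq> 0" and p: "psi k (y$j) \<noteq> 0" by (auto simp: W_def)
        from rb_supp[OF ek r] have yi: "tk k \<le> y$i" "y$i \<le> tk k + ek k" by auto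
        from psi_supp[OF p] have "y$j \<in> {t\<in>S. e k \<le> t \<and> t \<le> e k + 2 * w}" by (auto simp: S_def)
        then have "y$j \<in> ball (C k) (Ef (C k) / 2)" using C(2) by blast
        then have yj: "\<bar>y$j - C k\<bar> < Ef (C k) / 2" by (simp add: dist_real_def abs_minus_commute)
        have "norm (y - Qf (C k)) \<le> \<bar>y$1 - Qf (C k) $ 1\<bar> + \<bar>y$2 - Qf (C k) $ 2\<bar>" by (rule norm_l1)
        also have "\<dots> = \<bar>y$i - Qf (C k) $ i\<bar> + \<bar>y$j - Qf (C k) $ j\<bar>"
          using two_cases[OF ij, of 1] two_cases[OF ij, of 2] ij exhaust_2[of i] by (cases "i = 1") auto
        also have "\<dots> < Ef (C k)" using yi yj q by (auto simp: tk_def ek_def abs_le_iff)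
        finally have "y \<in> ball (Qf (C k)) (Ef (C k))" by (simp add: dist_norm norm_minus_commute)
        then have "y \<in> U" using q(5) by blast
        then have "1 \<le> v y" using U(2) yO by blast
        moreover have "0 \<le> ?f y" using rb_nonneg[OF ek] psi_nn by (simp add: W_def)
        ultimately show ?thesis by (simp add: mult_right_mono[of 1 "v y" "?f y", simplified])
      qed
    qed
    moreover have "integral UNIV ?f = integral UNIV (W i j (rb 0 1) (psi k))"
      by (rule stretch_int[OF ij ek sm_cont[OF psi_sm]]) (use psi_supp in blast)
    ultimately show ?thesis using io(2) by simp
  qed
  have fin: "finite {..<K}" by simp
  have sumW: "(\<Sum>k<K. W i j f (psi k) y) = W i j f (rb \<alpha> a) y" for f y
    by (simp add: W_def sum_distrib_left[symmetric] psi_sum)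
  have cpsi: "continuous_on UNIV (psi k)" for k by (rule sm_cont[OF psi_sm])
  have s0: "W i j f (psi k) y \<noteq> 0 \<Longrightarrow> y \<in> cbox (bl i p \<alpha>) (bl i p' (\<alpha> + a))"
    if "\<And>t. f t \<noteq> 0 \<Longrightarrow> p \<le> t \<and> t \<le> p'" for f k y p p'
    by (rule W_supp[OF ij that psiab])
  have rb0supp: "\<And>t. rb ?c0 ?w0 t \<noteq> 0 \<Longrightarrow> x$i - 3 * a \<le> t \<and> t \<le> x$i + 3 * a"
    using rb_supp[of ?w0 ?c0] a by fastforce
  have I1: "integral \<Omega> (\<lambda>y. v y * W i j (rb ?c0 ?w0) (rb \<alpha> a) y) = (\<Sum>k<K. integral \<Omega> (\<lambda>y. v y * W i j (rb ?c0 ?w0) (psi k) y))"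
  proof -
    have "integral \<Omega> (\<lambda>y. v y * W i j (rb ?c0 ?w0) (rb \<alpha> a) y) = integral \<Omega> (\<lambda>y. \<Sum>k<K. v y * W i j (rb ?c0 ?w0) (psi k) y)"
      by (simp add: sum_distrib_left[symmetric] sumW)
    also have "\<dots> = (\<Sum>k<K. integral \<Omega> (\<lambda>y. v y * W i j (rb ?c0 ?w0) (psi k) y))"
      by (rule integral_sum[OF fin]) (rule int_vw[OF adm W_cont[OF sm_cont[OF sm_rb] cpsi] s0[OF rb0supp] box])
    finally show ?thesis .
  qed
  have I2: "integral \<Omega> (\<lambda>y. norm (G y) * W i j ?ch (rb \<alpha> a) y) = (\<Sum>k<K. integral \<Omega> (\<lambda>y. norm (G y) * W i j ?ch (psi k) y))"
  proof -
    have "integral \<Omega> (\<lambda>y. norm (G y) * W i j ?ch (rb \<alpha> a) y) = integral \<Omega> (\<lambda>y. \<Sum>k<K. norm (G y) * W i j ?ch (psi k) y)"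
      by (simp add: sum_distrib_left[symmetric] sumW)
    also have "\<dots> = (\<Sum>k<K. integral \<Omega> (\<lambda>y. norm (G y) * W i j ?ch (psi k) y))"
      by (rule integral_sum[OF fin]) (rule int_fw[OF G_absint(2)[OF adm box] W_cont[OF chc cpsi] s0[OF ch4'] box])
    finally show ?thesis .
  qed
  have I3: "integral UNIV (W i j (rb 0 1) (rb \<alpha> a)) = (\<Sum>k<K. integral UNIV (W i j (rb 0 1) (psi k)))"
  proof -
    have "integral UNIV (W i j (rb 0 1) (rb \<alpha> a)) = integral UNIV (\<lambda>y. \<Sum>k<K. W i j (rb 0 1) (psi k) y)"
      by (simp add: sumW)
    also have "\<dots> = (\<Sum>k<K. integral UNIV (W i j (rb 0 1) (psi k)))"
    proof (rule integral_sum[OF fin])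
      fix k
      have "(W i j (rb 0 1) (psi k) has_integral integral (cbox (bl i 0 \<alpha>) (bl i 1 (\<alpha> + a))) (W i j (rb 0 1) (psi k))) UNIV"
        by (rule int_UNIV_cbox(1)[OF W_cont[OF sm_cont[OF sm_rb] cpsi] s0]) (use rb_supp[of 1 0] in auto)
      then show "W i j (rb 0 1) (psi k) integrable_on UNIV" by blast
    qed
    finally show ?thesis .
  qed
  have "(\<Sum>k<K. integral UNIV (W i j (rb 0 1) (psi k)) - integral \<Omega> (\<lambda>y. norm (G y) * W i j ?ch (psi k) y))
       \<le> (\<Sum>k<K. integral \<Omega> (\<lambda>y. v y * W i j (rb ?c0 ?w0) (psi k) y))"
  proof (rule sum_mono)
    fix k show "integral UNIV (W i j (rb 0 1) (psi k)) - integral \<Omega> (\<lambda>y. norm (G y) * W i j ?ch (psi k) y)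
       \<le> integral \<Omega> (\<lambda>y. v y * W i j (rb ?c0 ?w0) (psi k) y)"
      using core[of k] main[of k] by linarith
  qed
  then show ?thesis unfolding I1 I2 I3 sum_subtractf by simp
qed



lemma Wst_eq: assumes ij: "i \<noteq> j" shows "W i j (rb (x$i) s) (rb (x$j) s) = Wst s x"
proof -
  have "i = 1 \<and> j = 2 \<or> i = 2 \<and> j = 1" using ij exhaust_2[of i] exhaust_2[of j] by auto
  then show ?thesis by (auto simp: Wst_def W_def fun_eq_iff mult.commute)
qed

definition hL :: "R2 \<Rightarrow> 2 \<Rightarrow> 2 \<Rightarrow> real \<Rightarrow> real \<Rightarrow> real \<Rightarrow> R2 \<Rightarrow> real" where
  "hL x i j a s \<alpha> = (\<lambda>y. W j i (tz (min \<alpha> (x$j)) (max (\<alpha> + a) (x$j + s)) a) (rb (x$i - a) (2 * a)) y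
      + W i j (tz (min (x$i - a) (x$i)) (max (x$i - a + 2 * a) (x$i + s)) a) (rb (x$j) s) y)"

lemma link_boxes:
  fixes x :: R2
  assumes ij: "i \<noteq> j" and a: "0 < a" and s: "0 < s" "s \<le> a"
    and sq: "\<And>y. \<bar>y$i - x$i\<bar> \<le> 3 * a \<Longrightarrow> \<bar>y$j - x$j\<bar> \<le> 3 * a \<Longrightarrow> y \<in> \<Omega>"
    and al: "x$j - a \<le> \<alpha>" "\<alpha> \<le> x$j"
  shows "\<And>y. min \<alpha> (x$j) - a \<le> y$j \<Longrightarrow> y$j \<le> max (\<alpha> + a) (x$j + s) + a \<Longrightarrow> x$i - a \<le> y$i \<Longrightarrow> y$i \<le> x$i - a + 2 * a \<Longrightarrow> y \<in> \<Omega>"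
    and "\<And>y. min (x$i - a) (x$i) - a \<le> y$i \<Longrightarrow> y$i \<le> max (x$i - a + 2 * a) (x$i + s) + a \<Longrightarrow> x$j \<le> y$j \<Longrightarrow> y$j \<le> x$j + s \<Longrightarrow> y \<in> \<Omega>"
proof -
  show "y \<in> \<Omega>" if "min \<alpha> (x$j) - a \<le> y$j" "y$j \<le> max (\<alpha> + a) (x$j + s) + a" "x$i - a \<le> y$i" "y$i \<le> x$i - a + 2 * a" for y
    using that al s a by (intro sq) (auto simp: abs_le_iff min_def max_def split: if_splits)
  show "y \<in> \<Omega>" if "min (x$i - a) (x$i) - a \<le> y$i" "y$i \<le> max (x$i - a + 2 * a) (x$i + s) + a" "x$j \<le> y$j" "y$j \<le> x$j + s" for y
    using that al s a by (intro sq) (auto simp: abs_le_iff min_def max_def split: if_splits)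
qed

lemma link_Dc:
  fixes x :: R2
  assumes ij: "i \<noteq> j" and a: "0 < a" and s: "0 < s" "s \<le> a"
    and sq: "\<And>y. \<bar>y$i - x$i\<bar> \<le> 3 * a \<Longrightarrow> \<bar>y$j - x$j\<bar> \<le> 3 * a \<Longrightarrow> y \<in> \<Omega>"
    and al: "x$j - a \<le> \<alpha>" "\<alpha> \<le> x$j"
  shows "Dc \<Omega> (hL x i j a s \<alpha>)"
proof -
  note bx = link_boxes[OF assms]
  have a2: "0 < 2 * a" using a by simp
  show ?thesis unfolding hL_def
    by (rule Dc_add[OF gstep_Dc[OF ij[symmetric] a2 a bx(1)] gstep_Dc[OF ij s(1) a bx(2)]])
qed

lemma link:
  fixes x :: R2
  assumes adm: "cap_admissible F0 F1 \<Omega> v G"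
    and ij: "i \<noteq> j" and a: "0 < a" and s: "0 < s" "s \<le> a"
    and sq: "\<And>y. \<bar>y$i - x$i\<bar> \<le> 3 * a \<Longrightarrow> \<bar>y$j - x$j\<bar> \<le> 3 * a \<Longrightarrow> y \<in> \<Omega>"
    and al: "x$j - a \<le> \<alpha>" "\<alpha> \<le> x$j"
  shows "integral \<Omega> (\<lambda>y. v y * W i j (rb (x$i - a) (2 * a)) (rb \<alpha> a) y)
     \<le> integral \<Omega> (\<lambda>y. v y * Wst s x y) + integral \<Omega> (\<lambda>y. norm (G y) * hL x i j a s \<alpha> y)"
proof -
  note bx = link_boxes[OF ij a s sq al]
  have a2: "0 < 2 * a" using a by simp
  let ?h1 = "W j i (tz (min \<alpha> (x$j)) (max (\<alpha> + a) (x$j + s)) a) (rb (x$i - a) (2 * a))"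
  let ?h2 = "W i j (tz (min (x$i - a) (x$i)) (max (x$i - a + 2 * a) (x$i + s)) a) (rb (x$j) s)"
  have C: "\<bar>integral \<Omega> (\<lambda>y. v y * W j i (rb \<alpha> a) (rb (x$i - a) (2 * a)) y) - integral \<Omega> (\<lambda>y. v y * W j i (rb (x$j) s) (rb (x$i - a) (2 * a)) y)\<bar>
     \<le> integral \<Omega> (\<lambda>y. norm (G y) * ?h1 y)"
    by (rule gstep(1)[OF adm ij[symmetric] a s(1) a2 a bx(1)])
  have D: "\<bar>integral \<Omega> (\<lambda>y. v y * W i j (rb (x$i - a) (2 * a)) (rb (x$j) s) y) - integral \<Omega> (\<lambda>y. v y * W i j (rb (x$i) s) (rb (x$j) s) y)\<bar>
     \<le> integral \<Omega> (\<lambda>y. norm (G y) * ?h2 y)"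
    by (rule gstep(1)[OF adm ij a2 s(1) s(1) a bx(2)])
  have e1: "W j i (rb \<alpha> a) (rb (x$i - a) (2 * a)) = W i j (rb (x$i - a) (2 * a)) (rb \<alpha> a)"
    by (simp add: fun_eq_iff W_def mult.commute)
  have e2: "W j i (rb (x$j) s) (rb (x$i - a) (2 * a)) = W i j (rb (x$i - a) (2 * a)) (rb (x$j) s)"
    by (simp add: fun_eq_iff W_def mult.commute)
  have D1: "Dc \<Omega> ?h1" by (rule gstep_Dc[OF ij[symmetric] a2 a bx(1)])
  have D2: "Dc \<Omega> ?h2" by (rule gstep_Dc[OF ij s(1) a bx(2)])
  have "integral \<Omega> (\<lambda>y. norm (G y) * hL x i j a s \<alpha> y) = integral \<Omega> (\<lambda>y. norm (G y) * ?h1 y + norm (G y) * ?h2 y)"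
    by (simp add: hL_def distrib_left)
  also have "\<dots> = integral \<Omega> (\<lambda>y. norm (G y) * ?h1 y) + integral \<Omega> (\<lambda>y. norm (G y) * ?h2 y)"
    by (rule integral_add[OF Dc_int[OF adm D1] Dc_int[OF adm D2]])
  finally have hs: "integral \<Omega> (\<lambda>y. norm (G y) * hL x i j a s \<alpha> y) = integral \<Omega> (\<lambda>y. norm (G y) * ?h1 y) + integral \<Omega> (\<lambda>y. norm (G y) * ?h2 y)" .
  show ?thesis using C D unfolding e1 e2 hs Wst_eq[OF ij] by linarith
qed

definition oth :: "2 \<Rightarrow> 2" where "oth i = (if i = 1 then 2 else 1)"

lemma oth_ne: "i \<noteq> oth i"
  by (simp add: oth_def)

lemma crossing:
  fixes g :: "real \<Rightarrow> R2"
  assumes g: "path g" "pathstart g = x" "pathfinish g \<in> sphere x (2 * r)" and a: "0 < a" "a < r"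
  shows "\<exists>i \<alpha>. (\<alpha> = x$(oth i) \<or> \<alpha> = x$(oth i) - a) \<and>
      (\<forall>c. \<alpha> \<le> c \<and> c \<le> \<alpha> + a \<longrightarrow> (\<exists>q\<in>path_image g. q$(oth i) = c \<and> \<bar>q$i - x$i\<bar> \<le> a))"
proof -
  define f where "f t = max \<bar>g t $ 1 - x$1\<bar> \<bar>g t $ 2 - x$2\<bar>" for t
  have gc: "continuous_on {0..1} g" using g(1) by (simp add: path_def)
  have gk: "continuous_on {0..1} (\<lambda>t. g t $ k)" for k by (intro continuous_on_component gc)
  have fc: "continuous_on {0..1} f" unfolding f_def
    by (intro continuous_on_max continuous_on_rabs continuous_on_diff gk continuous_on_const)
  have f0: "f 0 = 0" using g(2) by (simp add: f_def pathstart_def)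
  have f1: "a \<le> f 1"
  proof -
    have "norm (g 1 - x) = 2 * r" using g(3) by (simp add: pathfinish_def dist_norm norm_minus_commute)
    moreover have "norm (g 1 - x) \<le> \<bar>g 1 $ 1 - x$1\<bar> + \<bar>g 1 $ 2 - x$2\<bar>" using norm_l1[of "g 1" x] by simp
    ultimately show ?thesis using a by (simp add: f_def)
  qed
  define T where "T = {t\<in>{0..1}. f t = a}"
  have Tne: "T \<noteq> {}"
  proof -
    obtain t where "0 \<le> t" "t \<le> 1" "f t = a" using IVT'[of f 0 a 1] f0 f1 fc a by auto
    then show ?thesis by (auto simp: T_def)
  qed
  have Tc: "compact T"
  proof -
    have "closed T" unfolding T_def using continuous_closed_preimage_constant[OF fc] by simp
    moreover have "bounded T" by (rule bounded_subset[OF compact_imp_bounded[OF compact_Icc[of 0 1]]]) (auto simp: T_def)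
    ultimately show ?thesis by (simp add: compact_eq_bounded_closed)
  qed
  define ts where "ts = Inf T"
  have bT: "bdd_below T" using bounded_imp_bdd_below[OF compact_imp_bounded[OF Tc]] .
  have tsT: "ts \<in> T" unfolding ts_def by (rule closed_contains_Inf[OF Tne bT compact_imp_closed[OF Tc]])
  have ts: "0 \<le> ts" "ts \<le> 1" "f ts = a" using tsT by (auto simp: T_def)
  have fle: "f t \<le> a" if tt: "0 \<le> t" "t \<le> ts" for t
  proof (rule ccontr)
    assume "\<not> f t \<le> a"
    then obtain u where "0 \<le> u" "u \<le> t" "f u = a"
      using IVT'[of f 0 a t] f0 a tt continuous_on_subset[OF fc, of "{0..t}"] ts by auto
    then have "u \<in> T" using tt ts by (auto simp: T_def)
    then have "ts \<le> u" unfolding ts_def by (rule cInf_lower[OF _ bT])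
    then have "u = t" "t = ts" using \<open>u \<le> t\<close> tt by auto
    then show False using \<open>f u = a\<close> \<open>\<not> f t \<le> a\<close> by simp
  qed
  have gtsc: "continuous_on {0..ts} (\<lambda>t. g t $ k)" for k using gk by (rule continuous_on_subset) (use ts in auto)
  have inimg: "g t \<in> path_image g" if "0 \<le> t" "t \<le> ts" for t using that ts by (auto simp: path_image_def)
  have cmp: "\<bar>g t $ k - x$k\<bar> \<le> a" if "0 \<le> t" "t \<le> ts" for t k
  proof -
    have "\<bar>g t $ k - x$k\<bar> \<le> f t" using exhaust_2[of k] by (auto simp: f_def)
    then show ?thesis using fle[OF that] by simp
  qed
  have g0: "g 0 $ k = x$k" for k using g(2) by (simp add: pathstart_def)
  obtain k where k: "\<bar>g ts $ k - x$k\<bar> = a" using ts(3) by (auto simp: f_def max_def split: if_splits)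
  define i where "i = oth k"
  have ki: "oth i = k"
  proof -
    have "k = 1 \<or> k = 2" by (rule exhaust_2)
    then show ?thesis by (auto simp: i_def oth_def)
  qed
  show ?thesis
  proof (cases "g ts $ k - x$k = a")
    case True
    show ?thesis
    proof (intro exI[of _ i] exI[of _ "x$k"] conjI allI impI)
      show "x$k = x$(oth i) \<or> x$k = x$(oth i) - a" using ki by simp
      fix c assume c: "x$k \<le> c \<and> c \<le> x$k + a"
      obtain t where t: "0 \<le> t" "t \<le> ts" "g t $ k = c"
        using IVT'[of "\<lambda>t. g t $ k" 0 c ts] g0 c True ts gtsc by auto
      show "\<exists>q\<in>path_image g. q$(oth i) = c \<and> \<bar>q$i - x$i\<bar> \<le> a"
        using t inimg cmp ki by blast
    qed
  next
    case False
    then have F: "g ts $ k - x$k = - a" using k by (auto simp: abs_if split: if_splits)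
    show ?thesis
    proof (intro exI[of _ i] exI[of _ "x$k - a"] conjI allI impI)
      show "x$k - a = x$(oth i) \<or> x$k - a = x$(oth i) - a" using ki by simp
      fix c assume c: "x$k - a \<le> c \<and> c \<le> x$k - a + a"
      obtain t where t: "0 \<le> t" "t \<le> ts" "g t $ k = c"
        using IVT2'[of "\<lambda>t. g t $ k" ts c 0] g0 c F ts gtsc by auto
      show "\<exists>q\<in>path_image g. q$(oth i) = c \<and> \<bar>q$i - x$i\<bar> \<le> a"
        using t inimg cmp ki by blast
    qed
  qed
qed



lemma hG_Dc:
  fixes x :: R2
  assumes ij: "i \<noteq> j" and a: "0 < a"
    and sq: "\<And>y. \<bar>y$i - x$i\<bar> \<le> 3 * a \<Longrightarrow> \<bar>y$j - x$j\<bar> \<le> 3 * a \<Longrightarrow> y \<in> \<Omega>"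
    and al: "x$j - a \<le> \<alpha>" "\<alpha> \<le> x$j"
  shows "Dc \<Omega> (W i j (tz (x$i - 2 * a) (x$i + 2 * a) a) (rb \<alpha> a))"
proof -
  have bx: "\<And>y. min (x$i - 2 * a) (x$i - 2 * a) - a \<le> y$i \<Longrightarrow> y$i \<le> max (x$i - 2 * a + 4 * a) (x$i - 2 * a + 4 * a) + a
     \<Longrightarrow> \<alpha> \<le> y$j \<Longrightarrow> y$j \<le> \<alpha> + a \<Longrightarrow> y \<in> \<Omega>"
    using al a by (intro sq) (auto simp: abs_le_iff)
  have "Dc \<Omega> (W i j (tz (min (x$i - 2 * a) (x$i - 2 * a)) (max (x$i - 2 * a + 4 * a) (x$i - 2 * a + 4 * a)) a) (rb \<alpha> a))"
    by (rule gstep_Dc[OF ij a a bx])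
  moreover have "x$i - 2 * a + 4 * a = x$i + 2 * a" by simp
  ultimately show ?thesis by simp
qed

lemma sq_lemma:
  fixes x :: R2
  assumes ij: "i \<noteq> j" and b: "ball x R \<subseteq> \<Omega>" and "6 * a < R"
  shows "\<And>y. \<bar>y$i - x$i\<bar> \<le> 3 * a \<Longrightarrow> \<bar>y$j - x$j\<bar> \<le> 3 * a \<Longrightarrow> y \<in> \<Omega>"
proof -
  fix y :: R2 assume h: "\<bar>y$i - x$i\<bar> \<le> 3 * a" "\<bar>y$j - x$j\<bar> \<le> 3 * a"
  have "\<bar>y$1 - x$1\<bar> + \<bar>y$2 - x$2\<bar> = \<bar>y$i - x$i\<bar> + \<bar>y$j - x$j\<bar>"
  proof -
    have "i = 1 \<and> j = 2 \<or> i = 2 \<and> j = 1" using ij exhaust_2[of i] exhaust_2[of j] by auto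
    then show ?thesis by auto
  qed
  then have "norm (y - x) < R" using norm_l1[of y x] h assms(3) by linarith
  then show "y \<in> \<Omega>" using b by (auto simp: dist_norm norm_minus_commute)
qed

theorem lemma2p5:
  fixes \<Omega> F :: "R2 set" and x :: R2 and r :: real
  assumes "open \<Omega>" "connected \<Omega>"
    and "compact F" "F \<subseteq> \<Omega>"
    and "\<exists>D. open D \<and> connected D \<and> D \<noteq> {} \<and> F = closure D"
    and "x \<in> \<Omega> - closure F" "r > 0" "ball x (2*r) \<subseteq> \<Omega> - closure F"
  shows "\<exists>c::real. c > 0 \<and>
    (\<forall>g. path g \<and> pathstart g = x \<and> pathfinish g \<in> sphere x (2*r)
       \<longrightarrow> cap F (path_image g) \<Omega> > ereal c)"
proof -
  note oO = assms(1) and cO = assms(2) and FO = assms(4) and xO = assms(6) and r = assms(7) and bx = assms(8)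
  obtain D where D: "open D" "D \<noteq> {}" "F = closure D" using assms(5) by blast
  obtain p where pD: "p \<in> D" using D(2) by blast
  obtain \<rho> where rho: "0 < \<rho>" "ball p \<rho> \<subseteq> D" using D(1) pD by (meson openE)
  have DF: "D \<subseteq> F" using D(3) closure_subset by blast
  have pO: "p \<in> \<Omega>" using pD DF FO by blast
  have xO': "x \<in> \<Omega>" using xO by blast
  have "path_connected \<Omega>" by (rule connected_open_path_connected[OF oO cO])
  then obtain \<pi> where pi: "path \<pi>" "path_image \<pi> \<subseteq> \<Omega>" "pathstart \<pi> = x" "pathfinish \<pi> = p"
    using xO' pO unfolding path_connected_def by blast
  obtain \<delta> where dl: "0 < \<delta>" "(\<Union>y\<in>path_image \<pi>. cball y \<delta>) \<subseteq> \<Omega>"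
    using compact_subset_open_imp_cball_epsilon_subset[OF compact_path_image[OF pi(1)] oO pi(2)] by blast
  define a where "a = r / 4"
  have a: "0 < a" "a < r" using r by (auto simp: a_def)
  define s where "s = min (min (\<delta> / 6) a) (\<rho> / 4)"
  have s: "0 < s" "s \<le> a" "6 * s \<le> \<delta>" "4 * s \<le> \<rho>" using dl rho a by (auto simp: s_def)
  have ucont: "uniformly_continuous_on {0..1} \<pi>"
    using compact_uniformly_continuous[of "{0..1}" \<pi>] pi(1) by (simp add: path_def)
  obtain d where d0: "0 < d" and d1: "\<forall>t\<in>{0..1}. \<forall>t'\<in>{0..1}. dist t' t < d \<longrightarrow> dist (\<pi> t') (\<pi> t) < s"
    using ucont[unfolded uniformly_continuous_on_def, rule_format, OF s(1)] by blast
  have d: "0 < d" "\<And>t t'. t \<in> {0..1} \<Longrightarrow> t' \<in> {0..1} \<Longrightarrow> dist t' t < d \<Longrightarrow> dist (\<pi> t') (\<pi> t) < s"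
    using d0 d1 by auto
  obtain N where N: "inverse (real (Suc N)) < d" using reals_Archimedean[OF d(1)] by blast
  define M where "M = Suc N"
  define y where "y k = \<pi> (real k / real M)" for k
  have y0: "y 0 = x" using pi(3) by (simp add: y_def pathstart_def)
  have yM: "y M = p" using pi(4) by (simp add: y_def pathfinish_def M_def)
  have hyp: "\<forall>k<M. cball (y k) (6 * s) \<subseteq> \<Omega> \<and> norm (y (Suc k) - y k) \<le> s"
  proof (intro allI impI conjI)
    fix k assume k: "k < M"
    have t1: "real k / real M \<in> {0..1}" using k by (auto simp: M_def)
    have t2: "real (Suc k) / real M \<in> {0..1}" using k by (auto simp: M_def)
    have "y k \<in> path_image \<pi>" using t1 by (simp add: y_def path_image_def)
    then have "cball (y k) \<delta> \<subseteq> \<Omega>" using dl(2) by blast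
    moreover have "cball (y k) (6 * s) \<subseteq> cball (y k) \<delta>" by (rule subset_cball) (rule s(3))
    ultimately show "cball (y k) (6 * s) \<subseteq> \<Omega>" by blast
    have "dist (real (Suc k) / real M) (real k / real M) = inverse (real M)"
      by (simp add: dist_real_def M_def divide_simps)
    then have "dist (real (Suc k) / real M) (real k / real M) < d" using N by (simp add: M_def)
    then have "dist (y (Suc k)) (y k) < s" using d(2)[OF t1 t2] by (simp add: y_def)
    then show "norm (y (Suc k) - y k) \<le> s" by (simp add: dist_norm)
  qed
  define hch where "hch z = (\<Sum>k<M. hstep s (y k) (y (Suc k)) z)" for z
  have Dch: "Dc \<Omega> hch" unfolding hch_def by (rule chain_Dc[OF s(1) hyp])
  have ball2: "ball x (2 * r) \<subseteq> \<Omega>" using bx by blast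
  have sixa: "6 * a < 2 * r" using r by (simp add: a_def)
  note sq = sq_lemma[OF _ ball2 sixa]
  define CB where "CB = (\<lambda>ib. (fst ib, if snd ib then x$(oth (fst ib)) else x$(oth (fst ib)) - a)) ` (UNIV :: (2 \<times> bool) set)"
  have CBfin: "finite CB" unfolding CB_def by simp
  have CBne: "CB \<noteq> {}" unfolding CB_def by simp
  have CBmem: "snd c = x$(oth (fst c)) \<or> snd c = x$(oth (fst c)) - a" if "c \<in> CB" for c
    using that unfolding CB_def by auto
  have CBin: "(i, \<alpha>) \<in> CB" if "\<alpha> = x$(oth i) \<or> \<alpha> = x$(oth i) - a" for i \<alpha>
  proof -
    from that have "(i, \<alpha>) = (\<lambda>ib. (fst ib, if snd ib then x$(oth (fst ib)) else x$(oth (fst ib)) - a)) (i, \<alpha> = x$(oth i))"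
      using a by auto
    then show ?thesis unfolding CB_def by blast
  qed
  have CBal: "x$(oth (fst c)) - a \<le> snd c" "snd c \<le> x$(oth (fst c))" if "c \<in> CB" for c
    using CBmem[OF that] a by auto
  define hG where "hG c = W (fst c) (oth (fst c)) (tz (x$(fst c) - 2 * a) (x$(fst c) + 2 * a) a) (rb (snd c) a)" for c
  define hLc where "hLc c = hL x (fst c) (oth (fst c)) a s (snd c)" for c
  define hall where "hall z = hch z + (\<Sum>c\<in>CB. hG c z + hLc c z)" for z
  have DhG: "Dc \<Omega> (hG c)" if "c \<in> CB" for c
    unfolding hG_def by (rule hG_Dc[OF oth_ne a(1) sq[OF oth_ne] CBal[OF that]])
  have DhL: "Dc \<Omega> (hLc c)" if "c \<in> CB" for c
    unfolding hLc_def by (rule link_Dc[OF oth_ne a(1) s(1,2) sq[OF oth_ne] CBal[OF that]])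
  have Dsum: "Dc \<Omega> (\<lambda>z. \<Sum>c\<in>CB. hG c z + hLc c z)"
    by (rule Dc_sum) (rule Dc_add[OF DhG DhL])
  have Dall: "Dc \<Omega> hall" unfolding hall_def by (rule Dc_add[OF Dch Dsum])
  define Qc where "Qc c = integral UNIV (W (fst c) (oth (fst c)) (rb 0 1) (rb (snd c) a))" for c
  define Q where "Q = Min (Qc ` CB)"
  have Qpos: "0 < Q" unfolding Q_def using CBfin CBne Q_pos[OF oth_ne a(1)] by (simp add: Qc_def)
  have Qle: "Q \<le> Qc c" if "c \<in> CB" for c unfolding Q_def using CBfin that by simp
  define H where "H = integral \<Omega> (\<lambda>z. (hall z)^2)"
  have H0: "0 \<le> H" unfolding H_def by (rule integral_nonneg[OF Dc_sq[OF Dall]]) simp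
  show ?thesis
  proof (intro exI[of _ "Q^2 / (2 * (H + 1))"] conjI allI impI)
    show "0 < Q^2 / (2 * (H + 1))" using Qpos H0 by simp
    fix g assume g: "path g \<and> pathstart g = x \<and> pathfinish g \<in> sphere x (2*r)"
    have "ereal (Q^2 / (2 * (integral \<Omega> (\<lambda>z. (hall z)^2) + 1))) < cap F (path_image g) \<Omega>"
    proof (rule cap_lower[OF Qpos _ Dc_sq[OF Dall]])
      fix v G assume adm: "cap_admissible F (path_image g) \<Omega> v G"
      show "Q \<le> integral \<Omega> (\<lambda>z. norm (G z) * hall z) \<and> (\<lambda>z. norm (G z) * hall z) integrable_on \<Omega>"
      proof
        show iall: "(\<lambda>z. norm (G z) * hall z) integrable_on \<Omega>" by (rule Dc_int[OF adm Dall])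
        obtain U0 where U0: "open U0" "F \<subseteq> U0" "\<forall>z\<in>U0 \<inter> \<Omega>. v z = 0"
          using adm by (auto simp: cap_admissible_def)
        obtain U1 where U1: "open U1" "path_image g \<subseteq> U1" "\<forall>z\<in>U1 \<inter> \<Omega>. 1 \<le> v z"
          using adm by (auto simp: cap_admissible_def)
        obtain i \<alpha> where cr: "\<alpha> = x$(oth i) \<or> \<alpha> = x$(oth i) - a"
          "\<forall>c. \<alpha> \<le> c \<and> c \<le> \<alpha> + a \<longrightarrow> (\<exists>q\<in>path_image g. q$(oth i) = c \<and> \<bar>q$i - x$i\<bar> \<le> a)"
          using crossing[of g x r a] g a by blast
        let ?c = "(i, \<alpha>)"
        have cCB: "?c \<in> CB" by (rule CBin[OF cr(1)])
        have al: "x$(oth i) - a \<le> \<alpha>" "\<alpha> \<le> x$(oth i)" using CBal[OF cCB] by auto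
        have cross: "\<exists>q\<in>U1. q$(oth i) = c \<and> \<bar>q$i - x$i\<bar> \<le> a" if "\<alpha> \<le> c" "c \<le> \<alpha> + a" for c
          using cr(2) that U1(2) by blast
        have gs: "integral UNIV (W i (oth i) (rb 0 1) (rb \<alpha> a))
            - integral \<Omega> (\<lambda>z. norm (G z) * W i (oth i) (tz (x$i - 2 * a) (x$i + 2 * a) a) (rb \<alpha> a) z)
            \<le> integral \<Omega> (\<lambda>z. v z * W i (oth i) (rb (x$i - a) (2 * a)) (rb \<alpha> a) z)"
          by (rule gamma_side[OF adm oth_ne a(1) sq[OF oth_ne] al U1(1) _ cross]) (use U1(3) in auto)
        have lk: "integral \<Omega> (\<lambda>z. v z * W i (oth i) (rb (x$i - a) (2 * a)) (rb \<alpha> a) z)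
            \<le> integral \<Omega> (\<lambda>z. v z * Wst s x z) + integral \<Omega> (\<lambda>z. norm (G z) * hL x i (oth i) a s \<alpha> z)"
          by (rule link[OF adm oth_ne a(1) s(1,2) sq[OF oth_ne] al])
        have ch: "integral \<Omega> (\<lambda>z. v z * Wst s (y 0) z) \<le> integral \<Omega> (\<lambda>z. v z * Wst s (y M) z)
           + integral \<Omega> (\<lambda>z. norm (G z) * (\<Sum>k<M. hstep s (y k) (y (Suc k)) z))"
          by (rule chain[OF adm s(1) hyp])
        have p0: "integral \<Omega> (\<lambda>z. v z * Wst s p z) = 0"
        proof -
          have "integral \<Omega> (\<lambda>z. v z * Wst s p z) = integral \<Omega> (\<lambda>z. 0)"
          proof (rule integral_cong)
            fix z assume zO: "z \<in> \<Omega>"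
            show "v z * Wst s p z = 0"
            proof (cases "Wst s p z = 0")
              case False
              then have "rb (p$1) s (z$1) \<noteq> 0" "rb (p$2) s (z$2) \<noteq> 0" by (auto simp: Wst_def W_def)
              then have "p$1 \<le> z$1 \<and> z$1 \<le> p$1 + s" "p$2 \<le> z$2 \<and> z$2 \<le> p$2 + s"
                using rb_supp[OF s(1)] by auto
              then have "norm (z - p) \<le> 2 * s" using norm_l1[of z p] by linarith
              then have "z \<in> ball p \<rho>" using s(1,4) by (simp add: dist_norm norm_minus_commute)
              then have "z \<in> U0" using rho(2) DF U0(2) by blast
              then show ?thesis using U0(3) zO by simp
            qed simp
          qed
          then show ?thesis by simp
        qed
        have hsum: "integral \<Omega> (\<lambda>z. norm (G z) * hG ?c z) + integral \<Omega> (\<lambda>z. norm (G z) * hLc ?c z) + integral \<Omega> (\<lambda>z. norm (G z) * hch z)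
            \<le> integral \<Omega> (\<lambda>z. norm (G z) * hall z)"
        proof -
          have i1: "(\<lambda>z. norm (G z) * hG ?c z) integrable_on \<Omega>" by (rule Dc_int[OF adm DhG[OF cCB]])
          have i2: "(\<lambda>z. norm (G z) * hLc ?c z) integrable_on \<Omega>" by (rule Dc_int[OF adm DhL[OF cCB]])
          have i3: "(\<lambda>z. norm (G z) * hch z) integrable_on \<Omega>" by (rule Dc_int[OF adm Dch])
          have "integral \<Omega> (\<lambda>z. norm (G z) * hG ?c z) + integral \<Omega> (\<lambda>z. norm (G z) * hLc ?c z) + integral \<Omega> (\<lambda>z. norm (G z) * hch z)
             = integral \<Omega> (\<lambda>z. norm (G z) * hG ?c z + norm (G z) * hLc ?c z + norm (G z) * hch z)"
            using integral_add[OF integrable_add[OF i1 i2] i3] integral_add[OF i1 i2] by simp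
          also have "\<dots> \<le> integral \<Omega> (\<lambda>z. norm (G z) * hall z)"
          proof (rule integral_le[OF integrable_add[OF integrable_add[OF i1 i2] i3] iall])
            fix z
            have nn: "\<And>c. c \<in> CB \<Longrightarrow> 0 \<le> hG c z + hLc c z"
              using DhG DhL by (auto simp: Dc_def intro: add_nonneg_nonneg)
            have "hG ?c z + hLc ?c z \<le> (\<Sum>c\<in>CB. hG c z + hLc c z)"
              by (rule member_le_sum) (use cCB nn CBfin in auto)
            then have "hG ?c z + hLc ?c z + hch z \<le> hall z" by (simp add: hall_def)
            then have "norm (G z) * (hG ?c z + hLc ?c z + hch z) \<le> norm (G z) * hall z"
              by (rule mult_left_mono) simp
            then show "norm (G z) * hG ?c z + norm (G z) * hLc ?c z + norm (G z) * hch z \<le> norm (G z) * hall z"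
              by (simp add: distrib_left)
          qed
          finally show ?thesis .
        qed
        have "Q \<le> Qc ?c" by (rule Qle[OF cCB])
        also have "Qc ?c = integral UNIV (W i (oth i) (rb 0 1) (rb \<alpha> a))" by (simp add: Qc_def)
        finally show "Q \<le> integral \<Omega> (\<lambda>z. norm (G z) * hall z)"
          using gs lk ch p0 hsum y0 yM unfolding hG_def hLc_def hch_def by simp
      qed
    qed
    then show "ereal (Q^2 / (2 * (H + 1))) < cap F (path_image g) \<Omega>" by (simp add: H_def)
  qed
qed

end
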